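(* Let $\lambda$ be a partition with $|\lambda|=n$. As an $\mathcal{A}_n$-module, $V_\lambda=\bigoplus_{T\in\mathrm{RYT}(\lambda)}U_T$, where $U_T=\mathrm{span}_{\mathbb{Q}(q,t)}\{F_\tau:\tau\in\mathrm{PSYT}(\lambda;T)\}$, and each $U_T$ is an irreducible $\mathcal{A}_n$-submodule.
   Context: All algebras over $\mathbb{Q}(q,t)$. $\mathcal{H}_n$: $T_1,\dots,T_{n-1}$, $(T_i-1)(T_i+t)=0$, braid relations. $\mathcal{A}_n$: $\mathcal{H}_n$ plus commuting invertible $\theta_1,\dots,\theta_n$, $\theta_{i+1}=tT_i^{-1}\theta_iT_i^{-1}$, $T_i\theta_j=\theta_jT_i$ ($j\notin\{i,i+1\}$); $\pi_n=t^{n-1}\theta_1T_1^{-1}\cdots T_{n-1}^{-1}$. $\mathcal{D}_n$: $\mathcal{A}_n$ plus commuting $X_i$, $X_{i+1}=tT_i^{-1}X_iT_i^{-1}$, $T_iX_j=X_jT_i$ ($j\notin\{i,i+1\}$), $\pi_nX_i\pi_n^{-1}=X_{i+1}$ ($i<n$), $\pi_nX_n\pi_n^{-1}=qX_1$. English notation, content $c(\square)=b-a$. $\mathrm{RYT}(\lambda)$: labellings $T:\lambda\to\mathbb{Z}_{\ge0}$ weakly decreasing along rows and down columns. $\mathrm{PSYT}(\lambda)$: labellings by $jq^b$ ($1\le j\le n$, $b\ge0$), each $j$ once, strictly increasing along rows and columns for $jq^m<kq^\ell$ iff $m>\ell$ or ($m=\ell$, $j<k$); $\mathrm{PSYT}(\lambda;T)$: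 those with $\tau(\square)=iq^{T(\square)}$ for every box. $c_\tau(i),w_\tau(i)$: content and exponent of the box with index $i$; $s_i(\tau)$ exchanges indices $i,i+1$ (if valid); $\Psi(\tau)$: $kq^a\mapsto(k-1)q^a$ ($k\ge2$), $1q^a\mapsto nq^{a+1}$; order generated by $\Psi(\tau)>\tau$, $s_i(\tau)>\tau$ if $w_\tau(i)<w_\tau(i+1)$ or ($w_\tau(i)=w_\tau(i+1)$ and $c_\tau(i)-c_\tau(i+1)>1$). $S_\lambda$: irreducible $\mathcal{H}_n$-module with basis $e_\tau$ ($\tau$ standard), $\bar\theta_ie_\tau=t^{c_\tau(i)}e_\tau$ ($\bar\theta_1=1$, $\bar\theta_{i+1}=tT_i^{-1}\bar\theta_iT_i^{-1}$), $(tT_i^{-1}\bar\theta_i-\bar\theta_itT_i^{-1})e_\tau=(t^{c_\tau(i)}-t^{c_\tau(i+1)})e_{s_i(\tau)}$ if $s_i(\tau)>\tau$, $T_ie_\tau=e_\tau$ / $-te_\tau$ for same row / column; $\mathcal{A}_n$-module via $T_i\mapsto T_i$, $\theta_1\mapsto1$; $V_\lambda=\mathcal{D}_n\otimes_{\mathcal{A}_n}S_\lambda$. $\{F_\tau\}_{\tau\in\mathrm{PSYT}(\lambda)}$ is the basis of $V_\lambda$ determined by $F_\tau=1\otimes e_\tau$ for standard $\tau$, $F_{s_i(\tau)}=\big(tT_i^{-1}+\frac{(t-1)q^{w_\tau(i+1)}t^{c_\tau(i+1)}}{q^{w_\tau(i)}t^{c_\tau(i)}-q^{w_\tau(i+1)}t^{c_\tau(i+1)}}\big)F_\tau$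 if $s_i(\tau)>\tau$, $F_{\Psi(\tau)}=q^{w_\tau(1)}X_n\pi_n^{-1}F_\tau$; it satisfies $\theta_iF_\tau=q^{w_\tau(i)}t^{c_\tau(i)}F_\tau$. *)

theory Defs
  imports "HOL-Computational_Algebra.Polynomial" "HOL-Computational_Algebra.Fraction_Field"
begin

type_synonym K = "rat poly poly fract"

text \<open>t is the inner indeterminate, q the outer one; both transcendental and independent.\<close>
definition tK :: K where "tK = Fract [:[:0, 1:]:] 1"
definition qK :: K where "qK = Fract [:0, 1:] 1"

section \<open>Partitions, boxes, tableaux (English notation, 0-indexed boxes (row, column))\<close>

definition is_partition :: "nat list \<Rightarrow> nat \<Rightarrow> bool" where
  "is_partition la n \<longleftrightarrow> sorted_wrt (\<ge>) la \<and> (\<forall>x\<in>set la. 0 < x) \<and> sum_list la = n"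

definition boxes :: "nat list \<Rightarrow> (nat \<times> nat) set" where
  "boxes la = {(a, b). a < length la \<and> b < la ! a}"

definition content :: "nat \<times> nat \<Rightarrow> int" where
  "content bx = int (snd bx) - int (fst bx)"

text \<open>A label (j, m) stands for j q^m.\<close>
definition lab_less :: "nat \<times> nat \<Rightarrow> nat \<times> nat \<Rightarrow> bool" where
  "lab_less x y \<longleftrightarrow> snd x > snd y \<or> (snd x = snd y \<and> fst x < fst y)"

definition RYT :: "nat list \<Rightarrow> (nat \<times> nat \<Rightarrow> nat) set" where
  "RYT la = {T. (\<forall>bx. bx \<notin> boxes la \<longrightarrow> T bx = 0)
     \<and> (\<forall>a b. (a, b) \<in> boxes la \<and> (a, b + 1) \<in> boxes la \<longrightarrow> T (a, b + 1) \<le> T (a, b))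
     \<and> (\<forall>a b. (a, b) \<in> boxes la \<and> (a + 1, b) \<in> boxes la \<longrightarrow> T (a + 1, b) \<le> T (a, b))}"

definition PSYT :: "nat \<Rightarrow> nat list \<Rightarrow> (nat \<times> nat \<Rightarrow> nat \<times> nat) set" where
  "PSYT n la = {\<tau>. (\<forall>bx. bx \<notin> boxes la \<longrightarrow> \<tau> bx = (0, 0))
     \<and> bij_betw (\<lambda>bx. fst (\<tau> bx)) (boxes la) {1..n}
     \<and> (\<forall>a b. (a, b) \<in> boxes la \<and> (a, b + 1) \<in> boxes la \<longrightarrow> lab_less (\<tau> (a, b)) (\<tau> (a, b + 1)))
     \<and> (\<forall>a b. (a, b) \<in> boxes la \<and> (a + 1, b) \<in> boxes la \<longrightarrow> lab_less (\<tau> (a, b)) (\<tau> (a + 1, b)))}"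

definition PSYT_T :: "nat \<Rightarrow> nat list \<Rightarrow> (nat \<times> nat \<Rightarrow> nat) \<Rightarrow> (nat \<times> nat \<Rightarrow> nat \<times> nat) set" where
  "PSYT_T n la T = {\<tau> \<in> PSYT n la. \<forall>bx \<in> boxes la. snd (\<tau> bx) = T bx}"

definition standard :: "nat \<Rightarrow> nat list \<Rightarrow> (nat \<times> nat \<Rightarrow> nat \<times> nat) \<Rightarrow> bool" where
  "standard n la \<tau> \<longleftrightarrow> \<tau> \<in> PSYT n la \<and> (\<forall>bx \<in> boxes la. snd (\<tau> bx) = 0)"

definition box_of :: "nat list \<Rightarrow> (nat \<times> nat \<Rightarrow> nat \<times> nat) \<Rightarrow> nat \<Rightarrow> nat \<times> nat" where
  "box_of la \<tau> i = (THE bx. bx \<in> boxes la \<and> fst (\<tau> bx) = i)"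

definition ctau :: "nat list \<Rightarrow> (nat \<times> nat \<Rightarrow> nat \<times> nat) \<Rightarrow> nat \<Rightarrow> int" where
  "ctau la \<tau> i = content (box_of la \<tau> i)"

definition wtau :: "nat list \<Rightarrow> (nat \<times> nat \<Rightarrow> nat \<times> nat) \<Rightarrow> nat \<Rightarrow> nat" where
  "wtau la \<tau> i = snd (\<tau> (box_of la \<tau> i))"

definition s_tab :: "nat \<Rightarrow> (nat \<times> nat \<Rightarrow> nat \<times> nat) \<Rightarrow> (nat \<times> nat \<Rightarrow> nat \<times> nat)" where
  "s_tab i \<tau> = (\<lambda>bx. if fst (\<tau> bx) = i then (i + 1, snd (\<tau> bx))
                     else if fst (\<tau> bx) = i + 1 then (i, snd (\<tau> bx)) else \<tau> bx)"

text \<open>Generating relation s_i(tau) > tau.\<close>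
definition s_up :: "nat list \<Rightarrow> (nat \<times> nat \<Rightarrow> nat \<times> nat) \<Rightarrow> nat \<Rightarrow> bool" where
  "s_up la \<tau> i \<longleftrightarrow> wtau la \<tau> i < wtau la \<tau> (i + 1)
     \<or> (wtau la \<tau> i = wtau la \<tau> (i + 1) \<and> ctau la \<tau> i - ctau la \<tau> (i + 1) > 1)"

definition Psi :: "nat \<Rightarrow> (nat \<times> nat \<Rightarrow> nat \<times> nat) \<Rightarrow> (nat \<times> nat \<Rightarrow> nat \<times> nat)" where
  "Psi n \<tau> = (\<lambda>bx. if fst (\<tau> bx) = 0 then \<tau> bx
                    else if 2 \<le> fst (\<tau> bx) then (fst (\<tau> bx) - 1, snd (\<tau> bx))
                    else (n, snd (\<tau> bx) + 1))"

definition Tinv :: "(nat \<Rightarrow> 'v \<Rightarrow> 'v) \<Rightarrow> nat \<Rightarrow> 'v \<Rightarrow> 'v" where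
  "Tinv Top i = inv (Top i)"

definition pi_op :: "(K \<Rightarrow> 'v \<Rightarrow> 'v) \<Rightarrow> nat \<Rightarrow> (nat \<Rightarrow> 'v \<Rightarrow> 'v) \<Rightarrow> (nat \<Rightarrow> 'v \<Rightarrow> 'v) \<Rightarrow> 'v \<Rightarrow> 'v" where
  "pi_op scale n Top th v = scale (tK ^ (n - 1)) (th 1 (foldr (\<lambda>i. Tinv Top i) [1..<n] v))"

definition D_module ::
  "(K \<Rightarrow> 'v::ab_group_add \<Rightarrow> 'v) \<Rightarrow> nat \<Rightarrow> (nat \<Rightarrow> 'v \<Rightarrow> 'v) \<Rightarrow> (nat \<Rightarrow> 'v \<Rightarrow> 'v) \<Rightarrow> (nat \<Rightarrow> 'v \<Rightarrow> 'v) \<Rightarrow> bool" where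
  "D_module scale n Top th X \<longleftrightarrow>
     vector_space scale
   \<and> (\<forall>i\<in>{1..<n}. Vector_Spaces.linear scale scale (Top i) \<and> bij (Top i))
   \<and> (\<forall>i\<in>{1..n}. Vector_Spaces.linear scale scale (th i) \<and> bij (th i))
   \<and> (\<forall>i\<in>{1..n}. Vector_Spaces.linear scale scale (X i))
   \<comment> \<open>Hecke relations\<close>
   \<and> (\<forall>i\<in>{1..<n}. \<forall>v. Top i (Top i v) + scale (tK - 1) (Top i v) - scale tK v = 0)
   \<and> (\<forall>i\<in>{1..<n}. \<forall>j\<in>{1..<n}. i + 1 = j \<longrightarrow> (\<forall>v. Top i (Top j (Top i v)) = Top j (Top i (Top j v))))
   \<and> (\<forall>i\<in>{1..<n}. \<forall>j\<in>{1..<n}. i + 2 \<le> j \<longrightarrow> (\<forall>v. Top i (Top j v) = Top j (Top i v)))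
   \<comment> \<open>affine Hecke relations\<close>
   \<and> (\<forall>i\<in>{1..n}. \<forall>j\<in>{1..n}. \<forall>v. th i (th j v) = th j (th i v))
   \<and> (\<forall>i\<in>{1..<n}. \<forall>v. th (i + 1) v = scale tK (Tinv Top i (th i (Tinv Top i v))))
   \<and> (\<forall>i\<in>{1..<n}. \<forall>j\<in>{1..n}. j \<noteq> i \<and> j \<noteq> i + 1 \<longrightarrow> (\<forall>v. Top i (th j v) = th j (Top i v)))
   \<comment> \<open>double affine relations\<close>
   \<and> (\<forall>i\<in>{1..n}. \<forall>j\<in>{1..n}. \<forall>v. X i (X j v) = X j (X i v))
   \<and> (\<forall>i\<in>{1..<n}. \<forall>v. X (i + 1) v = scale tK (Tinv Top i (X i (Tinv Top i v))))
   \<and> (\<forall>i\<in>{1..<n}. \<forall>j\<in>{1..n}. j \<noteq> i \<and> j \<noteq> i + 1 \<longrightarrow> (\<forall>v. Top i (X j v) = X j (Top i v)))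
   \<and> (\<forall>i\<in>{1..<n}. \<forall>v. pi_op scale n Top th (X i (inv (pi_op scale n Top th) v)) = X (i + 1) v)
   \<and> (\<forall>v. pi_op scale n Top th (X n (inv (pi_op scale n Top th) v)) = scale qK (X 1 v))"

text \<open>The data (V, T_i, theta_i, X_i, F) is the D_n-module V_lambda with its basis {F_tau}:
  F is a basis indexed by PSYT(lambda); for standard tau, F_tau = 1 \<otimes> e_tau where the e_tau
  satisfy the defining relations of S_lambda (with theta_1 acting by 1); F satisfies the
  recursions through s_i and Psi and the theta-eigenvalue property.\<close>
definition V_lambda_data ::
  "(K \<Rightarrow> 'v::ab_group_add \<Rightarrow> 'v) \<Rightarrow> nat \<Rightarrow> nat list \<Rightarrow> (nat \<Rightarrow> 'v \<Rightarrow> 'v) \<Rightarrow> (nat \<Rightarrow> 'v \<Rightarrow> 'v)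
     \<Rightarrow> (nat \<Rightarrow> 'v \<Rightarrow> 'v) \<Rightarrow> ((nat \<times> nat \<Rightarrow> nat \<times> nat) \<Rightarrow> 'v) \<Rightarrow> bool" where
  "V_lambda_data scale n la Top th X F \<longleftrightarrow>
     D_module scale n Top th X
   \<comment> \<open>F is a basis of V indexed by PSYT(lambda)\<close>
   \<and> inj_on F (PSYT n la)
   \<and> \<not> module.dependent scale (F ` PSYT n la)
   \<and> module.span scale (F ` PSYT n la) = UNIV
   \<comment> \<open>standard tableaux: F_tau = 1 \<otimes> e_tau, the S_lambda relations\<close>
   \<and> (\<forall>\<tau>. standard n la \<tau> \<longrightarrow> th 1 (F \<tau>) = F \<tau>)
   \<and> (\<forall>\<tau> i. standard n la \<tau> \<and> i \<in> {1..n} \<longrightarrow> th i (F \<tau>) = scale (tK powi ctau la \<tau> i) (F \<tau>))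
   \<and> (\<forall>\<tau> i. standard n la \<tau> \<and> i \<in> {1..<n} \<and> fst (box_of la \<tau> i) = fst (box_of la \<tau> (i + 1))
        \<longrightarrow> Top i (F \<tau>) = F \<tau>)
   \<and> (\<forall>\<tau> i. standard n la \<tau> \<and> i \<in> {1..<n} \<and> snd (box_of la \<tau> i) = snd (box_of la \<tau> (i + 1))
        \<longrightarrow> Top i (F \<tau>) = scale (- tK) (F \<tau>))
   \<and> (\<forall>\<tau> i. standard n la \<tau> \<and> i \<in> {1..<n} \<and> s_tab i \<tau> \<in> PSYT n la \<and> s_up la \<tau> i
        \<longrightarrow> scale tK (Tinv Top i (th i (F \<tau>))) - th i (scale tK (Tinv Top i (F \<tau>)))
            = scale (tK powi ctau la \<tau> i - tK powi ctau la \<tau> (i + 1)) (F (s_tab i \<tau>)))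
   \<comment> \<open>recursion through s_i\<close>
   \<and> (\<forall>\<tau> i. \<tau> \<in> PSYT n la \<and> i \<in> {1..<n} \<and> s_tab i \<tau> \<in> PSYT n la \<and> s_up la \<tau> i
        \<longrightarrow> F (s_tab i \<tau>) = scale tK (Tinv Top i (F \<tau>))
              + scale ((tK - 1) * qK ^ wtau la \<tau> (i + 1) * tK powi ctau la \<tau> (i + 1)
                  / (qK ^ wtau la \<tau> i * tK powi ctau la \<tau> i
                     - qK ^ wtau la \<tau> (i + 1) * tK powi ctau la \<tau> (i + 1))) (F \<tau>))
   \<comment> \<open>recursion through Psi\<close>
   \<and> (\<forall>\<tau>. \<tau> \<in> PSYT n la \<longrightarrow>
        F (Psi n \<tau>) = scale (qK ^ wtau la \<tau> 1) (X n (inv (pi_op scale n Top th) (F \<tau>))))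
   \<comment> \<open>theta-eigenvalues\<close>
   \<and> (\<forall>\<tau> i. \<tau> \<in> PSYT n la \<and> i \<in> {1..n} \<longrightarrow>
        th i (F \<tau>) = scale (qK ^ wtau la \<tau> i * tK powi ctau la \<tau> i) (F \<tau>))"

definition An_stable :: "nat \<Rightarrow> (nat \<Rightarrow> 'v \<Rightarrow> 'v) \<Rightarrow> (nat \<Rightarrow> 'v \<Rightarrow> 'v) \<Rightarrow> 'v set \<Rightarrow> bool" where
  "An_stable n Top th W \<longleftrightarrow>
     (\<forall>i\<in>{1..<n}. Top i ` W \<subseteq> W \<and> Tinv Top i ` W \<subseteq> W)
   \<and> (\<forall>i\<in>{1..n}. th i ` W \<subseteq> W \<and> inv (th i) ` W \<subseteq> W)"

definition An_submodule ::
  "(K \<Rightarrow> 'v::ab_group_add \<Rightarrow> 'v) \<Rightarrow> nat \<Rightarrow> (nat \<Rightarrow> 'v \<Rightarrow> 'v) \<Rightarrow> (nat \<Rightarrow> 'v \<Rightarrow> 'v) \<Rightarrow> 'v set \<Rightarrow> bool" where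
  "An_submodule scale n Top th W \<longleftrightarrow> module.subspace scale W \<and> An_stable n Top th W"

definition An_irreducible ::
  "(K \<Rightarrow> 'v::ab_group_add \<Rightarrow> 'v) \<Rightarrow> nat \<Rightarrow> (nat \<Rightarrow> 'v \<Rightarrow> 'v) \<Rightarrow> (nat \<Rightarrow> 'v \<Rightarrow> 'v) \<Rightarrow> 'v set \<Rightarrow> bool" where
  "An_irreducible scale n Top th W \<longleftrightarrow>
     An_submodule scale n Top th W \<and> W \<noteq> {0}
   \<and> (\<forall>W'. An_submodule scale n Top th W' \<and> W' \<subseteq> W \<longrightarrow> W' = {0} \<or> W' = W)"

definition U_T :: "(K \<Rightarrow> 'v::ab_group_add \<Rightarrow> 'v) \<Rightarrow> nat \<Rightarrow> nat list \<Rightarrow> ((nat \<times> nat \<Rightarrow> nat \<times> nat) \<Rightarrow> 'v)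
     \<Rightarrow> (nat \<times> nat \<Rightarrow> nat) \<Rightarrow> 'v set" where
  "U_T scale n la F T = module.span scale (F ` PSYT_T n la T)"

definition internal_direct_sum ::
  "(K \<Rightarrow> 'v::ab_group_add \<Rightarrow> 'v) \<Rightarrow> 'i set \<Rightarrow> ('i \<Rightarrow> 'v set) \<Rightarrow> 'v set \<Rightarrow> bool" where
  "internal_direct_sum scale I U V \<longleftrightarrow>
     module.span scale (\<Union>i\<in>I. U i) = V
   \<and> (\<forall>J u. finite J \<and> J \<subseteq> I \<and> (\<forall>j\<in>J. u j \<in> U j) \<and> (\<Sum>j\<in>J. u j) = 0 \<longrightarrow> (\<forall>j\<in>J. u j = 0))"

end

theory Submission
  imports Defs "HOL-Library.Product_Lexorder"
begin

lemma boxes_iff: "(a, b) \<in> boxes la \<longleftrightarrow> a < length la \<and> b < la ! a"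
  by (simp add: boxes_def)

lemma finite_boxes: "finite (boxes la)"
proof -
  have "boxes la \<subseteq> {..<length la} \<times> {..<Max (insert 0 (set la))}"
  proof
    fix x assume "x \<in> boxes la"
    then obtain a b where x: "x = (a,b)" "a < length la" "b < la ! a" by (cases x) (auto simp: boxes_def)
    have "la ! a \<le> Max (insert 0 (set la))" using x(2) by (intro Max_ge) auto
    hence "b < Max (insert 0 (set la))" using x(3) by linarith
    thus "x \<in> {..<length la} \<times> {..<Max (insert 0 (set la))}" using x by auto
  qed
  thus ?thesis by (rule finite_subset) auto
qed

lemma card_boxes:
  assumes "is_partition la n" shows "card (boxes la) = n"
proof -
  have "boxes la = Sigma {..<length la} (\<lambda>a. {..<la ! a})" by (auto simp: boxes_def)
  hence "card (boxes la) = (\<Sum>a<length la. la ! a)" by (simp add: card_SigmaI)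
  also have "\<dots> = sum_list la" by (simp add: sum_list_sum_nth atLeast0LessThan)
  finally show ?thesis using assms by (simp add: is_partition_def)
qed

lemma boxes_down:
  assumes "is_partition la n" "(a', b') \<in> boxes la" "a \<le> a'" "b \<le> b'"
  shows "(a, b) \<in> boxes la"
proof -
  have s: "sorted_wrt (\<ge>) la" using assms(1) by (simp add: is_partition_def)
  have a': "a' < length la" "b' < la ! a'" using assms(2) by (auto simp: boxes_def)
  have "la ! a' \<le> la ! a"
  proof (cases "a = a'")
    case False
    hence "a < a'" using assms(3) by simp
    thus ?thesis using sorted_wrt_nth_less[OF s _ a'(1)] by blast
  qed simp
  thus ?thesis using a' assms(3,4) by (auto simp: boxes_def)
qed

definition labkey :: "nat \<times> nat \<Rightarrow> int \<times> nat" where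
  "labkey x = (- int (snd x), fst x)"

lemma lab_less_key: "lab_less x y \<longleftrightarrow> labkey x < labkey y"
  by (auto simp: lab_less_def labkey_def less_prod_def)

lemma labkey_inj: "labkey x = labkey y \<Longrightarrow> x = y"
  by (auto simp: labkey_def prod_eq_iff)

lemma lab_less_trans: "lab_less x y \<Longrightarrow> lab_less y z \<Longrightarrow> lab_less x z"
  by (simp add: lab_less_key)

lemma lab_less_asym: "lab_less x y \<Longrightarrow> \<not> lab_less y x"
  by (simp add: lab_less_key)

lemma lab_less_total: "x \<noteq> y \<Longrightarrow> lab_less x y \<or> lab_less y x"
  by (metis lab_less_key labkey_inj not_less_iff_gr_or_eq)

lemma PSYT_D:
  assumes "\<tau> \<in> PSYT n la"
  shows "\<And>bx. bx \<notin> boxes la \<Longrightarrow> \<tau> bx = (0, 0)"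
    and "bij_betw (\<lambda>bx. fst (\<tau> bx)) (boxes la) {1..n}"
    and "\<And>a b. (a, b) \<in> boxes la \<Longrightarrow> (a, b + 1) \<in> boxes la \<Longrightarrow> lab_less (\<tau> (a, b)) (\<tau> (a, b + 1))"
    and "\<And>a b. (a, b) \<in> boxes la \<Longrightarrow> (a + 1, b) \<in> boxes la \<Longrightarrow> lab_less (\<tau> (a, b)) (\<tau> (a + 1, b))"
  using assms by (auto simp: PSYT_def)

lemma PSYT_chain:
  assumes "is_partition la n" "\<tau> \<in> PSYT n la"
  shows "(a', b') \<in> boxes la \<Longrightarrow> a \<le> a' \<Longrightarrow> b \<le> b' \<Longrightarrow> (a, b) \<noteq> (a', b')
     \<Longrightarrow> lab_less (\<tau> (a, b)) (\<tau> (a', b'))"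
proof (induction "(a' + b') - (a + b)" arbitrary: a b rule: less_induct)
  case less
  show ?case
  proof (cases "a < a'")
    case True
    have m: "(a + 1, b) \<in> boxes la" using boxes_down[OF assms(1) less.prems(1)] True less.prems by auto
    have ab: "(a, b) \<in> boxes la" using boxes_down[OF assms(1) less.prems(1)] less.prems by auto
    have l1: "lab_less (\<tau> (a, b)) (\<tau> (a + 1, b))" using PSYT_D(4)[OF assms(2) ab m] .
    show ?thesis
    proof (cases "(a + 1, b) = (a', b')")
      case True thus ?thesis using l1 by simp
    next
      case False
      have "lab_less (\<tau> (a + 1, b)) (\<tau> (a', b'))"
        using less.hyps[of "a+1" b] less.prems True False by auto
      thus ?thesis using l1 lab_less_trans by blast
    qed
  next
    case False
    hence aa: "a = a'" using less.prems by auto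
    hence bb: "b < b'" using less.prems by auto
    have m: "(a, b + 1) \<in> boxes la" using boxes_down[OF assms(1) less.prems(1)] aa bb by auto
    have ab: "(a, b) \<in> boxes la" using boxes_down[OF assms(1) less.prems(1)] less.prems by auto
    have l1: "lab_less (\<tau> (a, b)) (\<tau> (a, b + 1))" using PSYT_D(3)[OF assms(2) ab m] .
    show ?thesis
    proof (cases "(a, b + 1) = (a', b')")
      case True thus ?thesis using l1 by simp
    next
      case False
      have "lab_less (\<tau> (a, b + 1)) (\<tau> (a', b'))"
        using less.hyps[of a "b+1"] less.prems aa bb False by auto
      thus ?thesis using l1 lab_less_trans by blast
    qed
  qed
qed

lemma PSYT_chain':
  assumes "is_partition la n" "\<tau> \<in> PSYT n la" "y \<in> boxes la" "fst x \<le> fst y" "snd x \<le> snd y" "x \<noteq> y"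
  shows "lab_less (\<tau> x) (\<tau> y)"
  using PSYT_chain[OF assms(1,2), of "fst y" "snd y" "fst x" "snd x"] assms(3-6) by auto

lemma PSYT_snd_mono:
  assumes "is_partition la n" "\<tau> \<in> PSYT n la" "y \<in> boxes la" "fst x \<le> fst y" "snd x \<le> snd y"
  shows "snd (\<tau> y) \<le> snd (\<tau> x)"
  using PSYT_chain'[OF assms] by (cases "x = y") (auto simp: lab_less_def)

lemma box_of_props:
  assumes "\<tau> \<in> PSYT n la" "k \<in> {1..n}"
  shows "box_of la \<tau> k \<in> boxes la" "fst (\<tau> (box_of la \<tau> k)) = k"
proof -
  have b: "bij_betw (\<lambda>bx. fst (\<tau> bx)) (boxes la) {1..n}" using PSYT_D(2)[OF assms(1)] .
  hence "k \<in> (\<lambda>bx. fst (\<tau> bx)) ` boxes la" using assms(2) by (simp add: bij_betw_def)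
  then obtain bx where bx: "bx \<in> boxes la" "fst (\<tau> bx) = k" by blast
  have u: "\<And>bx'. bx' \<in> boxes la \<and> fst (\<tau> bx') = k \<Longrightarrow> bx' = bx"
    using b bx unfolding bij_betw_def inj_on_def by blast
  have "box_of la \<tau> k = bx" unfolding box_of_def
  proof (rule the_equality)
    show "bx \<in> boxes la \<and> fst (\<tau> bx) = k" using bx by simp
    show "\<And>x. x \<in> boxes la \<and> fst (\<tau> x) = k \<Longrightarrow> x = bx" by (rule u)
  qed
  thus "box_of la \<tau> k \<in> boxes la" "fst (\<tau> (box_of la \<tau> k)) = k" using bx by auto
qed

lemma box_of_fst:
  assumes "\<tau> \<in> PSYT n la" "bx \<in> boxes la"
  shows "box_of la \<tau> (fst (\<tau> bx)) = bx"
proof -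
  have b: "bij_betw (\<lambda>bx. fst (\<tau> bx)) (boxes la) {1..n}" using PSYT_D(2)[OF assms(1)] .
  have u: "\<And>bx'. bx' \<in> boxes la \<and> fst (\<tau> bx') = fst (\<tau> bx) \<Longrightarrow> bx' = bx"
    using b assms(2) unfolding bij_betw_def inj_on_def by blast
  show ?thesis unfolding box_of_def
  proof (rule the_equality)
    show "bx \<in> boxes la \<and> fst (\<tau> bx) = fst (\<tau> bx)" using assms by simp
    show "\<And>x. x \<in> boxes la \<and> fst (\<tau> x) = fst (\<tau> bx) \<Longrightarrow> x = bx" by (rule u)
  qed
qed

lemma fst_in_range:
  assumes "\<tau> \<in> PSYT n la" "bx \<in> boxes la"
  shows "fst (\<tau> bx) \<in> {1..n}"
  using PSYT_D(2)[OF assms(1)] assms(2) by (auto simp: bij_betw_def)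

lemma PSYT_fst_inj:
  assumes "\<tau> \<in> PSYT n la" "x \<in> boxes la" "y \<in> boxes la" "fst (\<tau> x) = fst (\<tau> y)"
  shows "x = y"
  using PSYT_D(2)[OF assms(1)] assms(2-4) by (auto simp: bij_betw_def inj_on_def)

section \<open>Weights determine the tableau\<close>

lemma content_eq_cases:
  assumes "content x = content y"
  shows "(fst x < fst y \<and> snd x < snd y) \<or> (fst y < fst x \<and> snd y < snd x) \<or> x = y"
  using assms by (cases x, cases y) (auto simp: content_def)

lemma wt_aux:
  assumes part: "is_partition la n" and s: "\<sigma> \<in> PSYT n la" and r: "\<rho> \<in> PSYT n la"
    and w: "\<forall>k\<in>{1..n}. ctau la \<sigma> k = ctau la \<rho> k \<and> wtau la \<sigma> k = wtau la \<rho> k"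
    and x: "x \<in> boxes la" "\<sigma> x \<noteq> \<rho> x"
    and mn: "\<forall>z\<in>boxes la. \<sigma> z \<noteq> \<rho> z \<longrightarrow> \<not> lab_less (\<sigma> z) (\<sigma> x) \<and> \<not> lab_less (\<rho> z) (\<sigma> x)"
  shows False
proof -
  define k where "k = fst (\<sigma> x)"
  have k: "k \<in> {1..n}" using fst_in_range[OF s x(1)] k_def by simp
  define y where "y = box_of la \<rho> k"
  have y: "y \<in> boxes la" "fst (\<rho> y) = k" using box_of_props[OF r k] y_def by auto
  have bx: "box_of la \<sigma> k = x" using box_of_fst[OF s x(1)] k_def by simp
  have "wtau la \<sigma> k = wtau la \<rho> k" "ctau la \<sigma> k = ctau la \<rho> k" using w k by auto
  hence ws: "snd (\<sigma> x) = snd (\<rho> y)" and cs: "content x = content y"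
    unfolding wtau_def ctau_def bx y_def[symmetric] by auto
  have ry: "\<rho> y = \<sigma> x" using ws y(2) k_def by (simp add: prod_eq_iff)
  have yx: "y \<noteq> x" using ry x(2) by auto
  have yD: "\<sigma> y \<noteq> \<rho> y"
  proof
    assume "\<sigma> y = \<rho> y"
    hence "fst (\<sigma> y) = fst (\<sigma> x)" using ry by simp
    thus False using PSYT_fst_inj[OF s y(1) x(1)] yx by simp
  qed
  obtain a b where xab: "x = (a, b)" by (cases x)
  obtain a' b' where yab: "y = (a', b')" by (cases y)
  from content_eq_cases[OF cs] yx consider "a < a'" "b < b'" | "a' < a" "b' < b"
    using xab yab by auto
  thus False
  proof cases
    case 1
    define z where "z = (a' - 1, b')"
    have zb: "z \<in> boxes la" using boxes_down[OF part y(1)[unfolded yab]] z_def by auto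
    have l1: "lab_less (\<sigma> x) (\<sigma> z)" using PSYT_chain'[OF part s zb] 1 xab z_def by auto
    have l2: "lab_less (\<rho> z) (\<rho> y)" using PSYT_chain'[OF part r y(1)] 1 yab z_def by auto
    show False
    proof (cases "\<sigma> z = \<rho> z")
      case True thus ?thesis using l1 l2 ry lab_less_asym by metis
    next
      case False thus ?thesis using mn zb l2 ry by auto
    qed
  next
    case 2
    define z where "z = (a - 1, b)"
    have zb: "z \<in> boxes la" using boxes_down[OF part x(1)[unfolded xab]] z_def by auto
    have l1: "lab_less (\<rho> y) (\<rho> z)" using PSYT_chain'[OF part r zb] 2 yab z_def by auto
    have l2: "lab_less (\<sigma> z) (\<sigma> x)" using PSYT_chain'[OF part s x(1)] 2 xab z_def by auto
    show False
    proof (cases "\<sigma> z = \<rho> z")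
      case True thus ?thesis using l1 l2 ry lab_less_asym by metis
    next
      case False thus ?thesis using mn zb l2 by auto
    qed
  qed
qed

lemma PSYT_weight_eq:
  assumes part: "is_partition la n" and s: "\<sigma> \<in> PSYT n la" and r: "\<rho> \<in> PSYT n la"
    and w: "\<forall>k\<in>{1..n}. ctau la \<sigma> k = ctau la \<rho> k \<and> wtau la \<sigma> k = wtau la \<rho> k"
  shows "\<sigma> = \<rho>"
proof (rule ccontr)
  assume ne: "\<sigma> \<noteq> \<rho>"
  define D where "D = {x \<in> boxes la. \<sigma> x \<noteq> \<rho> x}"
  have "D \<noteq> {}"
  proof
    assume "D = {}"
    hence "\<forall>x. \<sigma> x = \<rho> x" using PSYT_D(1)[OF s] PSYT_D(1)[OF r] unfolding D_def by force
    thus False using ne by auto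
  qed
  have fD: "finite D" using finite_boxes unfolding D_def by auto
  define L where "L = labkey ` (\<sigma> ` D \<union> \<rho> ` D)"
  have fL: "finite L" "L \<noteq> {}" using fD \<open>D \<noteq> {}\<close> unfolding L_def by auto
  define m where "m = Min L"
  have mL: "m \<in> L" using fL m_def by auto
  have mle: "\<And>l. l \<in> L \<Longrightarrow> m \<le> l" using fL m_def by auto
  from mL obtain x where x: "x \<in> D" "m = labkey (\<sigma> x) \<or> m = labkey (\<rho> x)" unfolding L_def by auto
  have xb: "x \<in> boxes la" "\<sigma> x \<noteq> \<rho> x" using x(1) D_def by auto
  from x(2) show False
  proof
    assume m: "m = labkey (\<sigma> x)"
    have "\<forall>z\<in>boxes la. \<sigma> z \<noteq> \<rho> z \<longrightarrow> \<not> lab_less (\<sigma> z) (\<sigma> x) \<and> \<not> lab_less (\<rho> z) (\<sigma> x)"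
    proof (intro ballI impI)
      fix z assume "z \<in> boxes la" "\<sigma> z \<noteq> \<rho> z"
      hence "z \<in> D" unfolding D_def by auto
      hence "m \<le> labkey (\<sigma> z)" "m \<le> labkey (\<rho> z)" using mle unfolding L_def by auto
      thus "\<not> lab_less (\<sigma> z) (\<sigma> x) \<and> \<not> lab_less (\<rho> z) (\<sigma> x)" using m by (auto simp: lab_less_key)
    qed
    thus False using wt_aux[OF part s r w xb] by blast
  next
    assume m: "m = labkey (\<rho> x)"
    have w': "\<forall>k\<in>{1..n}. ctau la \<rho> k = ctau la \<sigma> k \<and> wtau la \<rho> k = wtau la \<sigma> k" using w by auto
    have "\<forall>z\<in>boxes la. \<rho> z \<noteq> \<sigma> z \<longrightarrow> \<not> lab_less (\<rho> z) (\<rho> x) \<and> \<not> lab_less (\<sigma> z) (\<rho> x)"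
    proof (intro ballI impI)
      fix z assume "z \<in> boxes la" "\<rho> z \<noteq> \<sigma> z"
      hence "z \<in> D" unfolding D_def by auto
      hence "m \<le> labkey (\<sigma> z)" "m \<le> labkey (\<rho> z)" using mle unfolding L_def by auto
      thus "\<not> lab_less (\<rho> z) (\<rho> x) \<and> \<not> lab_less (\<sigma> z) (\<rho> x)" using m by (auto simp: lab_less_key)
    qed
    thus False using wt_aux[OF part r s w' xb(1)] xb(2) by metis
  qed
qed

section \<open>Counting along diagonals\<close>

definition Sdiag :: "nat list \<Rightarrow> (nat \<times> nat \<Rightarrow> nat \<times> nat) \<Rightarrow> int \<Rightarrow> nat \<Rightarrow> (nat \<times> nat) set" where
  "Sdiag la \<rho> d v = {y \<in> boxes la. content y = d \<and> v \<le> snd (\<rho> y)}"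

lemma card_Sdiag:
  assumes r: "\<rho> \<in> PSYT n la"
  shows "card (Sdiag la \<rho> d v) = card {k \<in> {1..n}. ctau la \<rho> k = d \<and> v \<le> wtau la \<rho> k}"
proof -
  have inj: "inj_on (\<lambda>y. fst (\<rho> y)) (Sdiag la \<rho> d v)"
    using PSYT_fst_inj[OF r] unfolding Sdiag_def inj_on_def by auto
  have "(\<lambda>y. fst (\<rho> y)) ` Sdiag la \<rho> d v = {k \<in> {1..n}. ctau la \<rho> k = d \<and> v \<le> wtau la \<rho> k}"
  proof (intro equalityI subsetI)
    fix k assume "k \<in> (\<lambda>y. fst (\<rho> y)) ` Sdiag la \<rho> d v"
    then obtain y where y: "y \<in> boxes la" "content y = d" "v \<le> snd (\<rho> y)" "k = fst (\<rho> y)"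
      unfolding Sdiag_def by auto
    have "box_of la \<rho> k = y" using box_of_fst[OF r y(1)] y(4) by simp
    thus "k \<in> {k \<in> {1..n}. ctau la \<rho> k = d \<and> v \<le> wtau la \<rho> k}"
      using y fst_in_range[OF r y(1)] by (simp add: ctau_def wtau_def)
  next
    fix k assume k: "k \<in> {k \<in> {1..n}. ctau la \<rho> k = d \<and> v \<le> wtau la \<rho> k}"
    hence "box_of la \<rho> k \<in> Sdiag la \<rho> d v" "fst (\<rho> (box_of la \<rho> k)) = k"
      using box_of_props[OF r] by (auto simp: Sdiag_def ctau_def wtau_def)
    thus "k \<in> (\<lambda>y. fst (\<rho> y)) ` Sdiag la \<rho> d v" by (metis image_eqI)
  qed
  thus ?thesis using card_image[OF inj] by simp
qed

lemma card_perm: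
  assumes "bij_betw \<pi> {1..n} {1..n}"
  shows "card {k \<in> {1..n}. P (\<pi> k)} = card {k \<in> {1..n}. P k}"
proof -
  have inj: "inj_on \<pi> {k \<in> {1..n}. P (\<pi> k)}" using assms unfolding bij_betw_def inj_on_def by auto
  have "\<pi> ` {k \<in> {1..n}. P (\<pi> k)} = {k \<in> {1..n}. P k}"
  proof (intro equalityI subsetI)
    fix x assume "x \<in> \<pi> ` {k \<in> {1..n}. P (\<pi> k)}"
    thus "x \<in> {k \<in> {1..n}. P k}" using assms unfolding bij_betw_def by auto
  next
    fix x assume x: "x \<in> {k \<in> {1..n}. P k}"
    hence "x \<in> \<pi> ` {1..n}" using assms by (simp add: bij_betw_def)
    then obtain k where "k \<in> {1..n}" "x = \<pi> k" by blast
    thus "x \<in> \<pi> ` {k \<in> {1..n}. P (\<pi> k)}" using x by auto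
  qed
  thus ?thesis using card_image[OF inj] by simp
qed

lemma Sdiag_bounds:
  assumes part: "is_partition la n" and r: "\<rho> \<in> PSYT n la" and x: "x \<in> boxes la"
  defines "Q \<equiv> {y \<in> boxes la. content y = content x \<and> fst y < fst x}"
  shows "v \<le> snd (\<rho> x) \<Longrightarrow> card Q + 1 \<le> card (Sdiag la \<rho> (content x) v)"
    and "\<not> v \<le> snd (\<rho> x) \<Longrightarrow> card (Sdiag la \<rho> (content x) v) \<le> card Q"
proof -
  have fQ: "finite Q" using finite_boxes unfolding Q_def by auto
  have fS: "finite (Sdiag la \<rho> (content x) v)" using finite_boxes unfolding Sdiag_def by auto
  {
    assume v: "v \<le> snd (\<rho> x)"
    have "insert x Q \<subseteq> Sdiag la \<rho> (content x) v"
    proof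
      fix y assume "y \<in> insert x Q"
      then consider "y = x" | "y \<in> Q" by auto
      thus "y \<in> Sdiag la \<rho> (content x) v"
      proof cases
        case 1 thus ?thesis using x v by (simp add: Sdiag_def)
      next
        case 2
        hence y: "y \<in> boxes la" "content y = content x" "fst y < fst x" unfolding Q_def by auto
        hence "snd y < snd x" by (cases x, cases y) (auto simp: content_def)
        hence "snd (\<rho> x) \<le> snd (\<rho> y)" using PSYT_snd_mono[OF part r x, of y] y by auto
        thus ?thesis using y v by (simp add: Sdiag_def)
      qed
    qed
    moreover have "x \<notin> Q" unfolding Q_def by auto
    ultimately have "card (insert x Q) \<le> card (Sdiag la \<rho> (content x) v)"
      "card (insert x Q) = card Q + 1"
      using card_mono[OF fS] fQ by (blast, simp)
    thus "card Q + 1 \<le> card (Sdiag la \<rho> (content x) v)" by simp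
  }
  {
    assume v: "\<not> v \<le> snd (\<rho> x)"
    have "Sdiag la \<rho> (content x) v \<subseteq> Q"
    proof
      fix y assume "y \<in> Sdiag la \<rho> (content x) v"
      hence y: "y \<in> boxes la" "content y = content x" "v \<le> snd (\<rho> y)" unfolding Sdiag_def by auto
      show "y \<in> Q"
      proof (rule ccontr)
        assume "y \<notin> Q"
        hence "fst x \<le> fst y" using y unfolding Q_def by auto
        hence "snd x \<le> snd y" using y(2) by (cases x, cases y) (auto simp: content_def)
        hence "snd (\<rho> y) \<le> snd (\<rho> x)" using PSYT_snd_mono[OF part r y(1), of x] \<open>fst x \<le> fst y\<close> by auto
        thus False using v y(3) by auto
      qed
    qed
    thus "card (Sdiag la \<rho> (content x) v) \<le> card Q" using card_mono[OF fQ] by auto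
  }
qed

lemma PSYT_perm_snd:
  assumes part: "is_partition la n" and s: "\<sigma> \<in> PSYT n la" and t: "\<tau> \<in> PSYT n la"
    and p: "bij_betw \<pi> {1..n} {1..n}"
    and w: "\<forall>k\<in>{1..n}. ctau la \<sigma> k = ctau la \<tau> (\<pi> k) \<and> wtau la \<sigma> k = wtau la \<tau> (\<pi> k)"
    and x: "x \<in> boxes la"
  shows "snd (\<sigma> x) = snd (\<tau> x)"
proof -
  have eq: "card (Sdiag la \<sigma> d v) = card (Sdiag la \<tau> d v)" for d v
  proof -
    have "card (Sdiag la \<sigma> d v) = card {k \<in> {1..n}. ctau la \<sigma> k = d \<and> v \<le> wtau la \<sigma> k}"
      by (rule card_Sdiag[OF s])
    also have "{k \<in> {1..n}. ctau la \<sigma> k = d \<and> v \<le> wtau la \<sigma> k}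
        = {k \<in> {1..n}. ctau la \<tau> (\<pi> k) = d \<and> v \<le> wtau la \<tau> (\<pi> k)}" using w by auto
    also have "card \<dots> = card {k \<in> {1..n}. ctau la \<tau> k = d \<and> v \<le> wtau la \<tau> k}"
      by (rule card_perm[OF p, where P = "\<lambda>k. ctau la \<tau> k = d \<and> v \<le> wtau la \<tau> k"])
    also have "\<dots> = card (Sdiag la \<tau> d v)" by (rule card_Sdiag[OF t, symmetric])
    finally show ?thesis .
  qed
  have 1: "snd (\<sigma> x) \<le> snd (\<tau> x)"
  proof (rule ccontr)
    assume a: "\<not> snd (\<sigma> x) \<le> snd (\<tau> x)"
    show False using Sdiag_bounds(1)[OF part s x, of "snd (\<sigma> x)"] Sdiag_bounds(2)[OF part t x a]
      eq by simp
  qed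
  have 2: "snd (\<tau> x) \<le> snd (\<sigma> x)"
  proof (rule ccontr)
    assume a: "\<not> snd (\<tau> x) \<le> snd (\<sigma> x)"
    show False using Sdiag_bounds(1)[OF part t x, of "snd (\<tau> x)"] Sdiag_bounds(2)[OF part s x a]
      eq by simp
  qed
  show ?thesis using 1 2 by simp
qed

definition tr :: "nat \<Rightarrow> nat \<Rightarrow> nat" where
  "tr i k = (if k = i then i + 1 else if k = i + 1 then i else k)"

lemma s_tab_fst: "fst (s_tab i \<tau> bx) = tr i (fst (\<tau> bx))"
  by (simp add: s_tab_def tr_def)

lemma s_tab_snd: "snd (s_tab i \<tau> bx) = snd (\<tau> bx)"
  by (simp add: s_tab_def)

lemma s_tab_invol: "s_tab i (s_tab i \<tau>) = \<tau>"
  by (rule ext) (auto simp: s_tab_def prod_eq_iff)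

lemma tr_tr: "tr i (tr i k) = k"
  by (auto simp: tr_def)

lemma tr_range: "1 \<le> i \<Longrightarrow> i < n \<Longrightarrow> k \<in> {1..n} \<Longrightarrow> tr i k \<in> {1..n}"
  by (auto simp: tr_def split: if_splits)

lemma bij_tr: "1 \<le> i \<Longrightarrow> i < n \<Longrightarrow> bij_betw (tr i) {1..n} {1..n}"
  by (rule bij_betw_byWitness[where f' = "tr i"]) (auto simp: tr_tr tr_def)

lemma box_of_s_tab:
  assumes t: "\<tau> \<in> PSYT n la" and t': "s_tab i \<tau> \<in> PSYT n la" and i: "1 \<le> i" "i < n" and k: "k \<in> {1..n}"
  shows "box_of la (s_tab i \<tau>) k = box_of la \<tau> (tr i k)"
proof -
  define bx where "bx = box_of la \<tau> (tr i k)"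
  have bx: "bx \<in> boxes la" "fst (\<tau> bx) = tr i k" using box_of_props[OF t tr_range[OF i k]] bx_def by auto
  have "fst (s_tab i \<tau> bx) = k" using bx(2) by (simp add: s_tab_fst tr_tr)
  thus ?thesis using box_of_fst[OF t' bx(1)] bx_def by simp
qed

lemma wtau_s_tab:
  assumes "\<tau> \<in> PSYT n la" "s_tab i \<tau> \<in> PSYT n la" "1 \<le> i" "i < n" "k \<in> {1..n}"
  shows "wtau la (s_tab i \<tau>) k = wtau la \<tau> (tr i k)"
    and "ctau la (s_tab i \<tau>) k = ctau la \<tau> (tr i k)"
  using box_of_s_tab[OF assms] by (simp_all add: wtau_def ctau_def s_tab_snd)

lemma s_up_either:
  assumes part: "is_partition la n" and t: "\<tau> \<in> PSYT n la" and t': "s_tab i \<tau> \<in> PSYT n la"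
    and i: "1 \<le> i" "i < n"
  shows "s_up la \<tau> i \<or> s_up la (s_tab i \<tau>) i"
proof (rule ccontr)
  assume ns: "\<not> (s_up la \<tau> i \<or> s_up la (s_tab i \<tau>) i)"
  have i1: "i \<in> {1..n}" "i + 1 \<in> {1..n}" using i by auto
  define x where "x = box_of la \<tau> i"
  define y where "y = box_of la \<tau> (i + 1)"
  have x: "x \<in> boxes la" "fst (\<tau> x) = i" using box_of_props[OF t i1(1)] x_def by auto
  have y: "y \<in> boxes la" "fst (\<tau> y) = i + 1" using box_of_props[OF t i1(2)] y_def by auto
  have xy: "x \<noteq> y" using x y by auto
  have tri: "tr i i = i + 1" "tr i (i + 1) = i" by (auto simp: tr_def)
  have w1: "wtau la (s_tab i \<tau>) i = wtau la \<tau> (i + 1)" "wtau la (s_tab i \<tau>) (i + 1) = wtau la \<tau> i"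
    "ctau la (s_tab i \<tau>) i = ctau la \<tau> (i + 1)" "ctau la (s_tab i \<tau>) (i + 1) = ctau la \<tau> i"
    using wtau_s_tab[OF t t' i i1(1)] wtau_s_tab[OF t t' i i1(2)] tri by auto
  have w2: "wtau la \<tau> i = snd (\<tau> x)" "wtau la \<tau> (i + 1) = snd (\<tau> y)"
    "ctau la \<tau> i = content x" "ctau la \<tau> (i + 1) = content y"
    by (simp_all add: wtau_def ctau_def x_def y_def)
  have eqw: "snd (\<tau> x) = snd (\<tau> y)" and cd: "\<bar>content x - content y\<bar> \<le> 1"
    using ns unfolding s_up_def w1 w2 by auto
  have l1: "lab_less (\<tau> x) (\<tau> y)" using x(2) y(2) eqw by (simp add: lab_less_def)
  have n1: "\<not> (fst y \<le> fst x \<and> snd y \<le> snd x)"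
  proof
    assume "fst y \<le> fst x \<and> snd y \<le> snd x"
    hence "lab_less (\<tau> y) (\<tau> x)" using PSYT_chain'[OF part t x(1)] xy by auto
    thus False using l1 lab_less_asym by blast
  qed
  have l2: "lab_less (s_tab i \<tau> y) (s_tab i \<tau> x)"
    using x(2) y(2) eqw by (simp add: lab_less_def s_tab_fst s_tab_snd tr_def)
  have n2: "\<not> (fst x \<le> fst y \<and> snd x \<le> snd y)"
  proof
    assume "fst x \<le> fst y \<and> snd x \<le> snd y"
    hence "lab_less (s_tab i \<tau> x) (s_tab i \<tau> y)" using PSYT_chain'[OF part t' y(1)] xy by auto
    thus False using l2 lab_less_asym by blast
  qed
  show False using n1 n2 cd by (cases x, cases y) (auto simp: content_def)
qed

section \<open>Connectivity of PSYT(lambda;T) under swaps\<close>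

lemma rank_card:
  assumes r: "\<rho> \<in> PSYT n la" and x: "x \<in> boxes la"
  shows "card {y \<in> boxes la. fst (\<rho> y) \<le> fst (\<rho> x)} = fst (\<rho> x)"
proof -
  have inj: "inj_on (\<lambda>y. fst (\<rho> y)) {y \<in> boxes la. fst (\<rho> y) \<le> fst (\<rho> x)}"
    using PSYT_fst_inj[OF r] unfolding inj_on_def by auto
  have "(\<lambda>y. fst (\<rho> y)) ` {y \<in> boxes la. fst (\<rho> y) \<le> fst (\<rho> x)} = {1..fst (\<rho> x)}"
  proof (intro equalityI subsetI)
    fix k assume "k \<in> (\<lambda>y. fst (\<rho> y)) ` {y \<in> boxes la. fst (\<rho> y) \<le> fst (\<rho> x)}"
    thus "k \<in> {1..fst (\<rho> x)}" using fst_in_range[OF r] by fastforce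
  next
    fix k assume k: "k \<in> {1..fst (\<rho> x)}"
    hence kn: "k \<in> {1..n}" using fst_in_range[OF r x] by auto
    show "k \<in> (\<lambda>y. fst (\<rho> y)) ` {y \<in> boxes la. fst (\<rho> y) \<le> fst (\<rho> x)}"
      using box_of_props[OF r kn] k by (intro image_eqI[of _ _ "box_of la \<rho> k"]) auto
  qed
  thus ?thesis using card_image[OF inj] by simp
qed

definition invs :: "nat list \<Rightarrow> (nat \<times> nat \<Rightarrow> nat \<times> nat) \<Rightarrow> (nat \<times> nat \<Rightarrow> nat \<times> nat) \<Rightarrow> ((nat \<times> nat) \<times> (nat \<times> nat)) set" where
  "invs la \<sigma> \<tau> = {(x, y). x \<in> boxes la \<and> y \<in> boxes la \<and> fst (\<tau> x) < fst (\<tau> y) \<and> fst (\<sigma> y) < fst (\<sigma> x)}"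

lemma finite_invs: "finite (invs la \<sigma> \<tau>)"
proof -
  have "invs la \<sigma> \<tau> \<subseteq> boxes la \<times> boxes la" unfolding invs_def by auto
  thus ?thesis using finite_boxes by (meson finite_SigmaI finite_subset)
qed

lemma PSYT_T_D: "\<tau> \<in> PSYT_T n la T \<Longrightarrow> \<tau> \<in> PSYT n la \<and> (\<forall>bx\<in>boxes la. snd (\<tau> bx) = T bx)"
  by (simp add: PSYT_T_def)

lemma invs_empty_eq:
  assumes s: "\<sigma> \<in> PSYT_T n la T" and t: "\<tau> \<in> PSYT_T n la T" and e: "invs la \<sigma> \<tau> = {}"
  shows "\<tau> = \<sigma>"
proof -
  have s': "\<sigma> \<in> PSYT n la" and t': "\<tau> \<in> PSYT n la" using s t PSYT_T_D by auto
  have "fst (\<tau> x) = fst (\<sigma> x)" if x: "x \<in> boxes la" for x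
  proof -
    have "{y \<in> boxes la. fst (\<tau> y) \<le> fst (\<tau> x)} = {y \<in> boxes la. fst (\<sigma> y) \<le> fst (\<sigma> x)}"
    proof (intro equalityI subsetI)
      fix y assume y: "y \<in> {y \<in> boxes la. fst (\<tau> y) \<le> fst (\<tau> x)}"
      show "y \<in> {y \<in> boxes la. fst (\<sigma> y) \<le> fst (\<sigma> x)}"
      proof (cases "y = x")
        case False
        have yb: "y \<in> boxes la" "fst (\<tau> y) \<le> fst (\<tau> x)" using y by auto
        have "fst (\<tau> y) \<noteq> fst (\<tau> x)" using PSYT_fst_inj[OF t' yb(1) x] False by auto
        hence "fst (\<tau> y) < fst (\<tau> x)" using yb by linarith
        hence "\<not> fst (\<sigma> x) < fst (\<sigma> y)" using e y x unfolding invs_def by blast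
        thus ?thesis using y by auto
      qed (use x in auto)
    next
      fix y assume y: "y \<in> {y \<in> boxes la. fst (\<sigma> y) \<le> fst (\<sigma> x)}"
      show "y \<in> {y \<in> boxes la. fst (\<tau> y) \<le> fst (\<tau> x)}"
      proof (cases "y = x")
        case False
        have yb: "y \<in> boxes la" "fst (\<sigma> y) \<le> fst (\<sigma> x)" using y by auto
        have "fst (\<sigma> y) \<noteq> fst (\<sigma> x)" using PSYT_fst_inj[OF s' yb(1) x] False by auto
        hence "fst (\<sigma> y) < fst (\<sigma> x)" using yb by linarith
        hence "\<not> fst (\<tau> x) < fst (\<tau> y)" using e y x unfolding invs_def by blast
        thus ?thesis using y by auto
      qed (use x in auto)
    qed
    thus ?thesis using rank_card[OF t' x] rank_card[OF s' x] by simp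
  qed
  moreover have "snd (\<tau> x) = snd (\<sigma> x)" if "x \<in> boxes la" for x
    using s t that PSYT_T_D by metis
  ultimately show ?thesis
    using PSYT_D(1)[OF s'] PSYT_D(1)[OF t'] by (intro ext) (metis prod_eq_iff)
qed

lemma tr_lab:
  assumes "lab_less (j, w) (j', w')" "\<not> (j = i \<and> j' = i + 1 \<and> w = w')"
  shows "lab_less (tr i j, w) (tr i j', w')"
  using assms by (auto simp: lab_less_def tr_def)

lemma tr_less_back:
  assumes "tr i j < tr i j'" "\<not> (j = i + 1 \<and> j' = i)"
  shows "j < j'"
  using assms by (auto simp: tr_def split: if_splits)

lemma s_tab_PSYT_T:
  assumes part: "is_partition la n" and s: "\<sigma> \<in> PSYT_T n la T" and t: "\<tau> \<in> PSYT_T n la T"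
    and i: "1 \<le> i" "i < n"
    and x: "x \<in> boxes la" "fst (\<tau> x) = i" and y: "y \<in> boxes la" "fst (\<tau> y) = i + 1"
    and inv: "fst (\<sigma> y) < fst (\<sigma> x)"
  shows "s_tab i \<tau> \<in> PSYT_T n la T"
proof -
  have s': "\<sigma> \<in> PSYT n la" and t': "\<tau> \<in> PSYT n la" using s t PSYT_T_D by auto
  have sT: "\<And>bx. bx \<in> boxes la \<Longrightarrow> snd (\<sigma> bx) = T bx" using s PSYT_T_D by auto
  have tT: "\<And>bx. bx \<in> boxes la \<Longrightarrow> snd (\<tau> bx) = T bx" using t PSYT_T_D by auto
  have out: "\<And>bx. bx \<notin> boxes la \<Longrightarrow> s_tab i \<tau> bx = (0, 0)"
    using PSYT_D(1)[OF t'] i by (simp add: s_tab_def)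
  have bij: "bij_betw (\<lambda>bx. fst (s_tab i \<tau> bx)) (boxes la) {1..n}"
  proof -
    have "bij_betw (tr i \<circ> (\<lambda>bx. fst (\<tau> bx))) (boxes la) {1..n}"
      by (rule bij_betw_trans[OF PSYT_D(2)[OF t'] bij_tr[OF i]])
    thus ?thesis by (simp add: s_tab_fst o_def)
  qed
  have adj: "lab_less (s_tab i \<tau> u) (s_tab i \<tau> v)"
    if uv: "u \<in> boxes la" "v \<in> boxes la" "lab_less (\<tau> u) (\<tau> v)" "fst u \<le> fst v" "snd u \<le> snd v" for u v
  proof -
    have "\<not> (fst (\<tau> u) = i \<and> fst (\<tau> v) = i + 1 \<and> snd (\<tau> u) = snd (\<tau> v))"
    proof
      assume a: "fst (\<tau> u) = i \<and> fst (\<tau> v) = i + 1 \<and> snd (\<tau> u) = snd (\<tau> v)"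
      hence "u = x" "v = y" using PSYT_fst_inj[OF t'] uv x y by auto
      have uv': "u \<noteq> v" using a by auto
      have "lab_less (\<sigma> u) (\<sigma> v)" using PSYT_chain'[OF part s' uv(2)] uv uv' by auto
      moreover have "snd (\<sigma> u) = snd (\<sigma> v)" using a sT tT uv by metis
      ultimately have "fst (\<sigma> u) < fst (\<sigma> v)" by (simp add: lab_less_def)
      thus False using inv \<open>u = x\<close> \<open>v = y\<close> by simp
    qed
    hence "lab_less (tr i (fst (\<tau> u)), snd (\<tau> u)) (tr i (fst (\<tau> v)), snd (\<tau> v))"
      using tr_lab[of "fst (\<tau> u)" "snd (\<tau> u)" "fst (\<tau> v)" "snd (\<tau> v)" i] uv(3) by simp
    thus ?thesis by (simp add: s_tab_fst s_tab_snd prod_eq_iff lab_less_def)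
  qed
  have "s_tab i \<tau> \<in> PSYT n la"
    unfolding PSYT_def
    using out bij adj PSYT_D(3)[OF t'] PSYT_D(4)[OF t'] by auto
  thus ?thesis unfolding PSYT_T_def using tT by (simp add: s_tab_snd)
qed

lemma PSYT_T_connect:
  assumes part: "is_partition la n" and s: "\<sigma> \<in> PSYT_T n la T" and Ps: "P \<sigma>"
    and step: "\<And>\<tau> i. \<tau> \<in> PSYT_T n la T \<Longrightarrow> 1 \<le> i \<Longrightarrow> i < n \<Longrightarrow> s_tab i \<tau> \<in> PSYT_T n la T
                 \<Longrightarrow> P (s_tab i \<tau>) \<Longrightarrow> P \<tau>"
  shows "\<tau> \<in> PSYT_T n la T \<Longrightarrow> P \<tau>"
proof (induction "card (invs la \<sigma> \<tau>)" arbitrary: \<tau> rule: less_induct)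
  case less
  have t': "\<tau> \<in> PSYT n la" using less.prems PSYT_T_D by auto
  have s': "\<sigma> \<in> PSYT n la" using s PSYT_T_D by auto
  show ?case
  proof (cases "invs la \<sigma> \<tau> = {}")
    case True thus ?thesis using invs_empty_eq[OF s less.prems] Ps by simp
  next
    case False
    then obtain p0 where p0: "p0 \<in> invs la \<sigma> \<tau>" by auto
    obtain p where p: "p \<in> invs la \<sigma> \<tau>"
      and pmin: "\<And>q. q \<in> invs la \<sigma> \<tau> \<Longrightarrow> fst (\<tau> (snd p)) - fst (\<tau> (fst p)) \<le> fst (\<tau> (snd q)) - fst (\<tau> (fst q))"
      using ex_has_least_nat[of "\<lambda>q. q \<in> invs la \<sigma> \<tau>" p0 "\<lambda>q. fst (\<tau> (snd q)) - fst (\<tau> (fst q))"] p0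
      by blast
    obtain x y where pxy: "p = (x, y)" by (cases p)
    have xy: "x \<in> boxes la" "y \<in> boxes la" "fst (\<tau> x) < fst (\<tau> y)" "fst (\<sigma> y) < fst (\<sigma> x)"
      using p pxy unfolding invs_def by auto
    define i where "i = fst (\<tau> x)"
    have gap: "fst (\<tau> y) = i + 1"
    proof (rule ccontr)
      assume "fst (\<tau> y) \<noteq> i + 1"
      hence g: "i + 1 < fst (\<tau> y)" using xy(3) i_def by simp
      have i1: "i + 1 \<in> {1..n}" using g fst_in_range[OF t' xy(2)] by auto
      define z where "z = box_of la \<tau> (i + 1)"
      have z: "z \<in> boxes la" "fst (\<tau> z) = i + 1" using box_of_props[OF t' i1] z_def by auto
      have zx: "z \<noteq> x" "z \<noteq> y" using z xy i_def g by auto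
      have "fst (\<sigma> z) \<noteq> fst (\<sigma> x)" using PSYT_fst_inj[OF s' z(1) xy(1)] zx by auto
      then consider "fst (\<sigma> z) < fst (\<sigma> x)" | "fst (\<sigma> x) < fst (\<sigma> z)" by linarith
      thus False
      proof cases
        case 1
        hence "(x, z) \<in> invs la \<sigma> \<tau>" using xy z i_def unfolding invs_def by auto
        from pmin[OF this] show False using pxy z i_def g by simp
      next
        case 2
        hence "(z, y) \<in> invs la \<sigma> \<tau>" using xy z i_def g unfolding invs_def by auto
        from pmin[OF this] show False using pxy z i_def g xy by simp
      qed
    qed
    have i: "1 \<le> i" "i < n" using fst_in_range[OF t' xy(1)] fst_in_range[OF t' xy(2)] gap i_def by auto
    have t2: "s_tab i \<tau> \<in> PSYT_T n la T"
      using s_tab_PSYT_T[OF part s less.prems i xy(1) _ xy(2) gap xy(4)] i_def by simp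
    have sub: "invs la \<sigma> (s_tab i \<tau>) \<subseteq> invs la \<sigma> \<tau> - {(x, y)}"
    proof
      fix q assume q: "q \<in> invs la \<sigma> (s_tab i \<tau>)"
      obtain u v where quv: "q = (u, v)" by (cases q)
      have uv: "u \<in> boxes la" "v \<in> boxes la" "tr i (fst (\<tau> u)) < tr i (fst (\<tau> v))" "fst (\<sigma> v) < fst (\<sigma> u)"
        using q quv unfolding invs_def by (auto simp: s_tab_fst)
      have nb: "\<not> (fst (\<tau> u) = i + 1 \<and> fst (\<tau> v) = i)"
      proof
        assume "fst (\<tau> u) = i + 1 \<and> fst (\<tau> v) = i"
        hence "u = y" "v = x" using PSYT_fst_inj[OF t'] uv xy gap i_def by auto
        thus False using uv(4) xy(4) by simp
      qed
      have lt: "fst (\<tau> u) < fst (\<tau> v)" using tr_less_back[OF uv(3) nb] .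
      have "(u, v) \<noteq> (x, y)"
      proof
        assume "(u, v) = (x, y)"
        thus False using uv(3) gap i_def by (simp add: tr_def)
      qed
      thus "q \<in> invs la \<sigma> \<tau> - {(x, y)}" using quv uv lt unfolding invs_def by auto
    qed
    have "card (invs la \<sigma> (s_tab i \<tau>)) < card (invs la \<sigma> \<tau>)"
    proof -
      have "card (invs la \<sigma> (s_tab i \<tau>)) \<le> card (invs la \<sigma> \<tau> - {(x, y)})"
        using card_mono[OF _ sub] finite_invs by blast
      also have "\<dots> < card (invs la \<sigma> \<tau>)"
        by (rule card_Diff1_less[OF finite_invs]) (use p pxy in simp)
      finally show ?thesis .
    qed
    hence "P (s_tab i \<tau>)" using less.hyps t2 by blast
    thus ?thesis using step[OF less.prems i t2] by blast
  qed
qed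

section \<open>Non-emptiness of PSYT(lambda;T)\<close>

lemma PSYT_T_nonempty:
  assumes part: "is_partition la n" and T: "T \<in> RYT la"
  shows "PSYT_T n la T \<noteq> {}"
proof -
  define key where "key bx = (- int (T bx), fst bx, snd bx)" for bx :: "nat \<times> nat"
  define rk where "rk bx = card {y \<in> boxes la. key y < key bx}" for bx
  have keyinj: "key u = key v \<Longrightarrow> u = v" for u v by (auto simp: key_def prod_eq_iff)
  have rk_less: "rk u < rk v" if "u \<in> boxes la" "key u < key v" for u v
  proof -
    have "{y \<in> boxes la. key y < key u} \<subset> {y \<in> boxes la. key y < key v}"
      using that by auto
    thus ?thesis unfolding rk_def using finite_boxes by (intro psubset_card_mono) auto
  qed
  have inj: "inj_on rk (boxes la)"
  proof (rule inj_onI)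
    fix u v assume uv: "u \<in> boxes la" "v \<in> boxes la" "rk u = rk v"
    show "u = v"
    proof (rule ccontr)
      assume "u \<noteq> v"
      hence "key u < key v \<or> key v < key u" using keyinj by (meson neqE)
      thus False using rk_less uv by fastforce
    qed
  qed
  have rng: "rk ` boxes la \<subseteq> {0..<n}"
  proof
    fix k assume "k \<in> rk ` boxes la"
    then obtain u where u: "u \<in> boxes la" "k = rk u" by auto
    have "{y \<in> boxes la. key y < key u} \<subset> boxes la" using u by auto
    hence "rk u < card (boxes la)" unfolding rk_def using finite_boxes by (intro psubset_card_mono) auto
    thus "k \<in> {0..<n}" using u card_boxes[OF part] by simp
  qed
  have img: "rk ` boxes la = {0..<n}"
    using card_subset_eq[OF _ rng] card_image[OF inj] card_boxes[OF part] by simp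
  define \<tau> where "\<tau> bx = (if bx \<in> boxes la then (rk bx + 1, T bx) else (0, 0))" for bx
  have bij: "bij_betw (\<lambda>bx. fst (\<tau> bx)) (boxes la) {1..n}"
  proof -
    have "bij_betw (\<lambda>bx. rk bx + 1) (boxes la) {1..n}"
    proof (rule bij_betw_imageI)
      show "inj_on (\<lambda>bx. rk bx + 1) (boxes la)" using inj by (auto simp: inj_on_def)
      have "(\<lambda>bx. rk bx + 1) ` boxes la = (\<lambda>k. k + 1) ` (rk ` boxes la)" by (simp add: image_image)
      also have "\<dots> = {1..n}" unfolding img by (auto simp: image_iff)
      finally show "(\<lambda>bx. rk bx + 1) ` boxes la = {1..n}" .
    qed
    thus ?thesis by (rule bij_betw_cong[THEN iffD1, rotated]) (simp add: \<tau>_def)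
  qed
  have Tprops: "\<And>a b. (a, b) \<in> boxes la \<Longrightarrow> (a, b + 1) \<in> boxes la \<Longrightarrow> T (a, b + 1) \<le> T (a, b)"
    "\<And>a b. (a, b) \<in> boxes la \<Longrightarrow> (a + 1, b) \<in> boxes la \<Longrightarrow> T (a + 1, b) \<le> T (a, b)"
    using T unfolding RYT_def by auto
  have "\<tau> \<in> PSYT n la"
    unfolding PSYT_def
  proof (intro CollectI conjI allI impI)
    show "\<And>bx. bx \<notin> boxes la \<Longrightarrow> \<tau> bx = (0, 0)" by (simp add: \<tau>_def)
    show "bij_betw (\<lambda>bx. fst (\<tau> bx)) (boxes la) {1..n}" by (rule bij)
  next
    fix a b assume ab: "(a, b) \<in> boxes la \<and> (a, b + 1) \<in> boxes la"
    have "T (a, b + 1) < T (a, b) \<or> (T (a, b + 1) = T (a, b) \<and> rk (a, b) < rk (a, b + 1))"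
      using Tprops(1)[of a b] ab rk_less[of "(a, b)" "(a, b + 1)"] by (auto simp: key_def)
    thus "lab_less (\<tau> (a, b)) (\<tau> (a, b + 1))" using ab by (auto simp: \<tau>_def lab_less_def)
  next
    fix a b assume ab: "(a, b) \<in> boxes la \<and> (a + 1, b) \<in> boxes la"
    have "T (a + 1, b) < T (a, b) \<or> (T (a + 1, b) = T (a, b) \<and> rk (a, b) < rk (a + 1, b))"
      using Tprops(2)[of a b] ab rk_less[of "(a, b)" "(a + 1, b)"] by (auto simp: key_def)
    thus "lab_less (\<tau> (a, b)) (\<tau> (a + 1, b))" using ab by (auto simp: \<tau>_def lab_less_def)
  qed
  hence "\<tau> \<in> PSYT_T n la T" unfolding PSYT_T_def by (simp add: \<tau>_def)
  thus ?thesis by auto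
qed

lemma Fract1_eq_iff: "Fract (a::'a::idom) 1 = Fract b 1 \<longleftrightarrow> a = b"
  by (simp add: eq_fract)

lemma Fract1_pow: "(Fract (a::'a::idom) 1) ^ k = Fract (a ^ k) 1"
  by (induct k) (simp_all add: One_fract_def)

lemma tK_ne0: "tK \<noteq> 0" unfolding tK_def by (simp add: Zero_fract_def eq_fract)
lemma qK_ne0: "qK \<noteq> 0" unfolding qK_def by (simp add: Zero_fract_def eq_fract)

lemma qt_monom: "qK ^ w * tK ^ m = Fract (monom (monom 1 m) w) 1"
proof -
  have "qK ^ w * tK ^ m = Fract ([:0,1:] ^ w * [:[:0,1:]:] ^ m) 1"
    unfolding qK_def tK_def by (simp add: Fract1_pow)
  also have "[:0,1:] ^ w * [:[:0,1:]:] ^ m = (monom (monom (1::rat) m) w)"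
  proof -
    have a: "[:0,1:] ^ w = (monom 1 w :: rat poly poly)" by (simp add: monom_altdef)
    have b: "[:[:0,1:]:] ^ m = [:(monom (1::rat) m):]"
      by (induct m) (simp_all add: monom_altdef one_pCons)
    show ?thesis unfolding a b by (simp add: smult_monom)
  qed
  finally show ?thesis .
qed

lemma qt_inj_nat:
  assumes "qK ^ w * tK ^ m = qK ^ w' * tK ^ m'"
  shows "w = w' \<and> m = m'"
proof -
  have "(monom (monom (1::rat) m) w) = monom (monom 1 m') w'"
    using assms by (simp add: qt_monom Fract1_eq_iff)
  hence e: "coeff (monom (monom (1::rat) m) w) w = coeff (monom (monom 1 m') w') w" by simp
  have "w = w'"
  proof (rule ccontr)
    assume "w \<noteq> w'" then show False using e by (simp add: coeff_monom monom_eq_0_iff)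
  qed
  moreover have "m = m'" using e `w = w'` 
    by (metis coeff_monom one_neq_zero)
  ultimately show ?thesis by simp
qed

lemma qt_inj:
  assumes "qK ^ w * tK powi c = qK ^ w' * tK powi c'"
  shows "w = w' \<and> c = c'"
proof -
  define N where "N = nat \<bar>c\<bar> + nat \<bar>c'\<bar>"
  have gen: "tK powi d * tK ^ N = tK ^ nat (d + int N)" if "\<bar>d\<bar> \<le> int N" for d
  proof -
    have "tK powi d * tK ^ N = tK powi d * tK powi (int N)" by (simp add: power_int_of_nat)
    also have "\<dots> = tK powi (d + int N)" using tK_ne0 by (simp add: power_int_add)
    also have "d + int N = int (nat (d + int N))" using that by simp
    also have "tK powi int (nat (d + int N)) = tK ^ nat (d + int N)" by (rule power_int_of_nat)
    finally show ?thesis .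
  qed
  have pc: "tK powi c * tK ^ N = tK ^ nat (c + int N)" by (rule gen) (simp add: N_def)
  have pc': "tK powi c' * tK ^ N = tK ^ nat (c' + int N)" by (rule gen) (simp add: N_def)
  have "qK ^ w * tK ^ nat (c + int N) = qK ^ w' * tK ^ nat (c' + int N)"
    using assms by (metis mult.assoc pc pc')
  from qt_inj_nat[OF this] show ?thesis unfolding N_def by auto
qed

definition mu :: "nat list \<Rightarrow> (nat \<times> nat \<Rightarrow> nat \<times> nat) \<Rightarrow> nat \<Rightarrow> K" where
  "mu la \<tau> k = qK ^ wtau la \<tau> k * tK powi ctau la \<tau> k"

lemma mu_ne0: "mu la \<tau> k \<noteq> 0"
  using qK_ne0 tK_ne0 by (simp add: mu_def)

lemma mu_inj: "mu la \<sigma> k = mu la \<tau> j \<Longrightarrow> wtau la \<sigma> k = wtau la \<tau> j \<and> ctau la \<sigma> k = ctau la \<tau> j"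
  unfolding mu_def by (rule qt_inj)

lemma t_mu: "tK * mu la \<tau> k = qK ^ wtau la \<tau> k * tK powi (ctau la \<tau> k + 1)"
  using tK_ne0 by (simp add: mu_def power_int_add_1')

lemma beta_ne0:
  fixes x y t :: K
  assumes "x \<noteq> y" "x \<noteq> t * y" "y \<noteq> t * x" "t \<noteq> 0"
  shows "t - ((t - 1) * y / (x - y)) * (t - 1 + (t - 1) * y / (x - y)) \<noteq> 0"
proof -
  define d where "d = x - y"
  define c where "c = (t - 1) * y / d"
  have d0: "d \<noteq> 0" using assms d_def by simp
  have cd: "c * d = (t - 1) * y" using d0 by (simp add: c_def)
  have e1: "(t - c * (t - 1 + c)) * d^2 = t * d^2 - (c * d) * ((t - 1) * d + c * d)"
    by (simp add: power2_eq_square algebra_simps)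
  have e2: "t * d^2 - ((t - 1) * y) * ((t - 1) * d + (t - 1) * y) = (x - t * y) * (t * x - y)"
    unfolding d_def by (simp add: power2_eq_square algebra_simps)
  have "(t - c * (t - 1 + c)) * d^2 = (x - t * y) * (t * x - y)" using e1 e2 cd by simp
  moreover have "(x - t * y) * (t * x - y) \<noteq> 0" using assms by simp
  ultimately have "t - c * (t - 1 + c) \<noteq> 0" by auto
  thus ?thesis unfolding c_def d_def .
qed

lemma s_up_mu:
  assumes "s_up la \<tau> i"
  shows "mu la \<tau> i \<noteq> mu la \<tau> (i + 1)" "mu la \<tau> i \<noteq> tK * mu la \<tau> (i + 1)"
    "mu la \<tau> (i + 1) \<noteq> tK * mu la \<tau> i"
proof -
  show "mu la \<tau> i \<noteq> mu la \<tau> (i + 1)"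
    using assms mu_inj[of la \<tau> i \<tau> "i+1"] by (auto simp: s_up_def)
  show "mu la \<tau> i \<noteq> tK * mu la \<tau> (i + 1)"
  proof
    assume a: "mu la \<tau> i = tK * mu la \<tau> (i + 1)"
    have "mu la \<tau> i = qK ^ wtau la \<tau> (i+1) * tK powi (ctau la \<tau> (i+1) + 1)"
      using a t_mu[of la \<tau> "i+1"] by simp
    hence "qK ^ wtau la \<tau> i * tK powi ctau la \<tau> i = qK ^ wtau la \<tau> (i+1) * tK powi (ctau la \<tau> (i+1) + 1)"
      unfolding mu_def .
    from qt_inj[OF this] show False using assms by (auto simp: s_up_def)
  qed
  show "mu la \<tau> (i + 1) \<noteq> tK * mu la \<tau> i"
  proof
    assume a: "mu la \<tau> (i + 1) = tK * mu la \<tau> i"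
    have "mu la \<tau> (i + 1) = qK ^ wtau la \<tau> i * tK powi (ctau la \<tau> i + 1)"
      using a t_mu[of la \<tau> i] by simp
    hence "qK ^ wtau la \<tau> (i+1) * tK powi ctau la \<tau> (i+1) = qK ^ wtau la \<tau> i * tK powi (ctau la \<tau> i + 1)"
      unfolding mu_def .
    from qt_inj[OF this] show False using assms by (auto simp: s_up_def)
  qed
qed

locale VL =
  fixes scale :: "K \<Rightarrow> 'v::ab_group_add \<Rightarrow> 'v" and n :: nat and la :: "nat list"
    and Top th X :: "nat \<Rightarrow> 'v \<Rightarrow> 'v" and F :: "(nat \<times> nat \<Rightarrow> nat \<times> nat) \<Rightarrow> 'v"
  assumes n1: "1 \<le> n" and part: "is_partition la n" and V: "V_lambda_data scale n la Top th X F"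
begin

lemma Dm: "D_module scale n Top th X" using V by (simp add: V_lambda_data_def)

sublocale vs: vector_space scale using Dm by (simp add: D_module_def)

lemma lin_facts:
  assumes "Vector_Spaces.linear scale scale f"
  shows "f (x + y) = f x + f y" "f (scale a x) = scale a (f x)" "f (x - y) = f x - f y" "f 0 = 0"
    "f (sum g S) = (\<Sum>s\<in>S. f (g s))" "vs.span (f ` A) = f ` vs.span A"
proof -
  interpret h: module_hom scale scale f using assms by (simp add: linear_iff_module_hom)
  show "f (x + y) = f x + f y" "f (scale a x) = scale a (f x)" "f (x - y) = f x - f y" "f 0 = 0"
    "f (sum g S) = (\<Sum>s\<in>S. f (g s))" "vs.span (f ` A) = f ` vs.span A"
    by (simp_all add: h.add h.scale h.diff h.sum h.span_image)
qed

lemma T_lin: "i \<in> {1..<n} \<Longrightarrow> Vector_Spaces.linear scale scale (Top i)"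
  and T_bij: "i \<in> {1..<n} \<Longrightarrow> bij (Top i)"
  and th_lin: "k \<in> {1..n} \<Longrightarrow> Vector_Spaces.linear scale scale (th k)"
  and th_bij: "k \<in> {1..n} \<Longrightarrow> bij (th k)"
  and hecke: "i \<in> {1..<n} \<Longrightarrow> Top i (Top i v) + scale (tK - 1) (Top i v) - scale tK v = 0"
  and threl: "i \<in> {1..<n} \<Longrightarrow> th (i + 1) v = scale tK (Tinv Top i (th i (Tinv Top i v)))"
  and Tth: "i \<in> {1..<n} \<Longrightarrow> j \<in> {1..n} \<Longrightarrow> j \<noteq> i \<Longrightarrow> j \<noteq> i + 1 \<Longrightarrow> Top i (th j v) = th j (Top i v)"
  using Dm unfolding D_module_def by (elim conjE; simp)+

lemma Finj: "inj_on F (PSYT n la)"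
  and indep: "\<not> vs.dependent (F ` PSYT n la)"
  and spanU: "vs.span (F ` PSYT n la) = UNIV"
  and srec: "\<tau> \<in> PSYT n la \<Longrightarrow> i \<in> {1..<n} \<Longrightarrow> s_tab i \<tau> \<in> PSYT n la \<Longrightarrow> s_up la \<tau> i \<Longrightarrow>
        F (s_tab i \<tau>) = scale tK (Tinv Top i (F \<tau>))
              + scale ((tK - 1) * qK ^ wtau la \<tau> (i + 1) * tK powi ctau la \<tau> (i + 1)
                  / (qK ^ wtau la \<tau> i * tK powi ctau la \<tau> i
                     - qK ^ wtau la \<tau> (i + 1) * tK powi ctau la \<tau> (i + 1))) (F \<tau>)"
  and eig0: "\<tau> \<in> PSYT n la \<Longrightarrow> k \<in> {1..n} \<Longrightarrow> th k (F \<tau>) = scale (qK ^ wtau la \<tau> k * tK powi ctau la \<tau> k) (F \<tau>)"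
  using V unfolding V_lambda_data_def by (elim conjE; simp)+

lemma eig: "\<tau> \<in> PSYT n la \<Longrightarrow> k \<in> {1..n} \<Longrightarrow> th k (F \<tau>) = scale (mu la \<tau> k) (F \<tau>)"
  using eig0 by (simp add: mu_def)

lemma srec': "\<tau> \<in> PSYT n la \<Longrightarrow> i \<in> {1..<n} \<Longrightarrow> s_tab i \<tau> \<in> PSYT n la \<Longrightarrow> s_up la \<tau> i \<Longrightarrow>
        F (s_tab i \<tau>) = scale tK (Tinv Top i (F \<tau>))
              + scale ((tK - 1) * mu la \<tau> (i + 1) / (mu la \<tau> i - mu la \<tau> (i + 1))) (F \<tau>)"
  using srec by (simp add: mu_def mult.assoc)

lemma T_Tinv: "i \<in> {1..<n} \<Longrightarrow> Top i (Tinv Top i v) = v"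
  unfolding Tinv_def using T_bij by (simp add: bij_is_surj surj_f_inv_f)

lemma Tinv_T: "i \<in> {1..<n} \<Longrightarrow> Tinv Top i (Top i v) = v"
  unfolding Tinv_def using T_bij by (simp add: bij_is_inj inv_f_f)

lemma tTinv: "i \<in> {1..<n} \<Longrightarrow> scale tK (Tinv Top i v) = Top i v + scale (tK - 1) v"
proof -
  assume i: "i \<in> {1..<n}"
  have "Top i (Top i (Tinv Top i v)) + scale (tK - 1) (Top i (Tinv Top i v)) - scale tK (Tinv Top i v) = 0"
    by (rule hecke[OF i])
  thus ?thesis unfolding T_Tinv[OF i] by (simp add: algebra_simps)
qed

lemma Tinv_formula: "i \<in> {1..<n} \<Longrightarrow> Tinv Top i v = scale (inverse tK) (Top i v + scale (tK - 1) v)"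
proof -
  assume i: "i \<in> {1..<n}"
  have "Tinv Top i v = scale (inverse tK) (scale tK (Tinv Top i v))" using tK_ne0 by simp
  thus ?thesis unfolding tTinv[OF i] .
qed

lemma TT: "i \<in> {1..<n} \<Longrightarrow> Top i (Top i v) = scale tK v - scale (tK - 1) (Top i v)"
  using hecke[of i v] by (simp add: algebra_simps)

abbreviation "B \<equiv> F ` PSYT n la"

definition R :: "'v \<Rightarrow> (nat \<times> nat \<Rightarrow> nat \<times> nat) \<Rightarrow> K" where
  "R v \<sigma> = vs.representation B v (F \<sigma>)"

definition supp :: "'v \<Rightarrow> (nat \<times> nat \<Rightarrow> nat \<times> nat) set" where
  "supp v = {\<sigma> \<in> PSYT n la. R v \<sigma> \<noteq> 0}"

lemma indep': "vs.independent B" using indep by simp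

lemma R_add: "R (u + v) \<sigma> = R u \<sigma> + R v \<sigma>"
  unfolding R_def using vs.representation_add[OF indep'] spanU by simp

lemma R_diff: "R (u - v) \<sigma> = R u \<sigma> - R v \<sigma>"
  unfolding R_def using vs.representation_diff[OF indep'] spanU by simp

lemma R_scale: "R (scale a v) \<sigma> = a * R v \<sigma>"
  unfolding R_def using vs.representation_scale[OF indep'] spanU by simp

lemma R_zero: "R 0 \<sigma> = 0"
  unfolding R_def by (simp add: vs.representation_zero)

lemma R_F: "\<tau> \<in> PSYT n la \<Longrightarrow> \<sigma> \<in> PSYT n la \<Longrightarrow> R (F \<tau>) \<sigma> = (if \<sigma> = \<tau> then 1 else 0)"
  unfolding R_def using vs.representation_basis[OF indep', of "F \<tau>"] Finj
  by (auto simp: inj_on_def)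

lemma finite_supp: "finite (supp v)"
proof -
  have "F ` supp v \<subseteq> {b. vs.representation B v b \<noteq> 0}" unfolding supp_def R_def by auto
  hence "finite (F ` supp v)" using vs.finite_representation finite_subset by blast
  moreover have "inj_on F (supp v)" using Finj unfolding supp_def inj_on_def by auto
  ultimately show ?thesis using finite_image_iff by blast
qed

lemma expand: "v = (\<Sum>\<sigma>\<in>supp v. scale (R v \<sigma>) (F \<sigma>))"
proof -
  have e: "{b. vs.representation B v b \<noteq> 0} = F ` supp v"
  proof (intro equalityI subsetI)
    fix b assume b: "b \<in> {b. vs.representation B v b \<noteq> 0}"
    hence "b \<in> B" using vs.representation_ne_zero by blast
    then obtain \<sigma> where "\<sigma> \<in> PSYT n la" "b = F \<sigma>" by auto
    thus "b \<in> F ` supp v" using b unfolding supp_def R_def by auto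
  qed (auto simp: supp_def R_def)
  have "v = (\<Sum>b | vs.representation B v b \<noteq> 0. scale (vs.representation B v b) b)"
    using vs.sum_nonzero_representation_eq[OF indep', of v] spanU by simp
  also have "\<dots> = (\<Sum>b \<in> F ` supp v. scale (vs.representation B v b) b)" unfolding e ..
  also have "\<dots> = (\<Sum>\<sigma>\<in>supp v. scale (R v \<sigma>) (F \<sigma>))"
    using Finj by (subst sum.reindex) (auto simp: supp_def R_def inj_on_def)
  finally show ?thesis .
qed

lemma R_comb:
  assumes "finite S" "S \<subseteq> PSYT n la" "\<sigma> \<in> PSYT n la"
  shows "R (\<Sum>\<rho>\<in>S. scale (c \<rho>) (F \<rho>)) \<sigma> = (if \<sigma> \<in> S then c \<sigma> else 0)"
  using assms
proof (induction S rule: finite_induct)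
  case empty thus ?case by (simp add: R_zero)
next
  case (insert x S)
  have "R (\<Sum>\<rho>\<in>insert x S. scale (c \<rho>) (F \<rho>)) \<sigma> = c x * R (F x) \<sigma> + R (\<Sum>\<rho>\<in>S. scale (c \<rho>) (F \<rho>)) \<sigma>"
    using insert by (simp add: R_add R_scale)
  also have "\<dots> = (if \<sigma> \<in> insert x S then c \<sigma> else 0)"
    using insert by (auto simp: R_F)
  finally show ?case .
qed

lemma vec_eq: "(\<And>\<sigma>. \<sigma> \<in> PSYT n la \<Longrightarrow> R u \<sigma> = R v \<sigma>) \<Longrightarrow> u = v"
proof -
  assume h: "\<And>\<sigma>. \<sigma> \<in> PSYT n la \<Longrightarrow> R u \<sigma> = R v \<sigma>"
  have "supp u = supp v" using h unfolding supp_def by auto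
  hence "(\<Sum>\<sigma>\<in>supp u. scale (R u \<sigma>) (F \<sigma>)) = (\<Sum>\<sigma>\<in>supp v. scale (R v \<sigma>) (F \<sigma>))"
    using h by (auto simp: supp_def intro!: sum.cong)
  thus ?thesis using expand[of u] expand[of v] by simp
qed

lemma R_th: "k \<in> {1..n} \<Longrightarrow> \<sigma> \<in> PSYT n la \<Longrightarrow> R (th k v) \<sigma> = mu la \<sigma> k * R v \<sigma>"
proof -
  assume k: "k \<in> {1..n}" and s: "\<sigma> \<in> PSYT n la"
  have sp: "supp v \<subseteq> PSYT n la" unfolding supp_def by auto
  have "th k v = th k (\<Sum>\<rho>\<in>supp v. scale (R v \<rho>) (F \<rho>))" using expand[of v] by simp
  also have "\<dots> = (\<Sum>\<rho>\<in>supp v. scale (R v \<rho>) (th k (F \<rho>)))"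
    by (simp add: lin_facts(5,2)[OF th_lin[OF k]])
  also have "\<dots> = (\<Sum>\<rho>\<in>supp v. scale (R v \<rho> * mu la \<rho> k) (F \<rho>))"
    using eig[OF _ k] sp by (intro sum.cong) auto
  finally have "R (th k v) \<sigma> = (if \<sigma> \<in> supp v then R v \<sigma> * mu la \<sigma> k else 0)"
    using R_comb[OF finite_supp sp s] by simp
  thus ?thesis by (auto simp: supp_def s)
qed

lemma in_span_iff:
  assumes "A \<subseteq> PSYT n la"
  shows "v \<in> vs.span (F ` A) \<longleftrightarrow> supp v \<subseteq> A"
proof
  assume v: "v \<in> vs.span (F ` A)"
  show "supp v \<subseteq> A"
  proof
    fix \<sigma> assume "\<sigma> \<in> supp v"
    hence s: "\<sigma> \<in> PSYT n la" "R v \<sigma> \<noteq> 0" unfolding supp_def by auto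
    have FA: "F ` A \<subseteq> B" using assms by auto
    have "R v \<sigma> = vs.representation (F ` A) v (F \<sigma>)"
      unfolding R_def using vs.representation_extend[OF indep' v FA] by simp
    hence "F \<sigma> \<in> F ` A" using s(2) vs.representation_ne_zero by metis
    thus "\<sigma> \<in> A" using Finj s(1) assms by (auto simp: inj_on_def)
  qed
next
  assume "supp v \<subseteq> A"
  hence "(\<Sum>\<sigma>\<in>supp v. scale (R v \<sigma>) (F \<sigma>)) \<in> vs.span (F ` A)"
    by (intro vs.span_sum vs.span_scale vs.span_base) auto
  thus "v \<in> vs.span (F ` A)" using expand[of v] by simp
qed

end

context VL begin

lemma R1:
  assumes t: "\<tau> \<in> PSYT n la" and i: "i \<in> {1..<n}"
  shows "th (i + 1) (Top i (F \<tau>)) = scale (mu la \<tau> i) (Top i (F \<tau>)) + scale ((tK - 1) * mu la \<tau> i) (F \<tau>)"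
proof -
  have i1: "i \<in> {1..n}" using i by auto
  have "th (i + 1) (Top i (F \<tau>)) = scale tK (Tinv Top i (th i (Tinv Top i (Top i (F \<tau>)))))"
    by (rule threl[OF i])
  also have "\<dots> = scale tK (Tinv Top i (scale (mu la \<tau> i) (F \<tau>)))"
    by (simp add: Tinv_T[OF i] eig[OF t i1])
  also have "\<dots> = Top i (scale (mu la \<tau> i) (F \<tau>)) + scale (tK - 1) (scale (mu la \<tau> i) (F \<tau>))"
    by (rule tTinv[OF i])
  also have "\<dots> = scale (mu la \<tau> i) (Top i (F \<tau>)) + scale ((tK - 1) * mu la \<tau> i) (F \<tau>)"
    by (simp add: lin_facts(2)[OF T_lin[OF i]])
  finally show ?thesis .
qed

lemma R2:
  assumes t: "\<tau> \<in> PSYT n la" and i: "i \<in> {1..<n}"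
  shows "th i (Top i (F \<tau>)) + scale ((tK - 1) * mu la \<tau> i) (F \<tau>) = scale (mu la \<tau> (i + 1)) (Top i (F \<tau>))"
proof -
  have i1: "i \<in> {1..n}" "i + 1 \<in> {1..n}" using i by auto
  have "scale (mu la \<tau> (i + 1)) (Top i (F \<tau>)) = Top i (th (i + 1) (F \<tau>))"
    by (simp only: eig[OF t i1(2)] lin_facts(2)[OF T_lin[OF i]])
  also have "\<dots> = Top i (scale tK (Tinv Top i (th i (Tinv Top i (F \<tau>)))))"
    using threl[OF i, of "F \<tau>"] by simp
  also have "\<dots> = scale tK (th i (Tinv Top i (F \<tau>)))"
    by (simp add: lin_facts(2)[OF T_lin[OF i]] T_Tinv[OF i])
  also have "\<dots> = th i (scale tK (Tinv Top i (F \<tau>)))"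
    by (simp add: lin_facts(2)[OF th_lin[OF i1(1)]])
  also have "\<dots> = th i (Top i (F \<tau>) + scale (tK - 1) (F \<tau>))"
    by (simp add: tTinv[OF i])
  also have "\<dots> = th i (Top i (F \<tau>)) + scale ((tK - 1) * mu la \<tau> i) (F \<tau>)"
    by (simp add: lin_facts(1,2)[OF th_lin[OF i1(1)]] eig[OF t i1(1)])
  finally show ?thesis by simp
qed

lemma Rj:
  assumes t: "\<tau> \<in> PSYT n la" and i: "i \<in> {1..<n}" and j: "j \<in> {1..n}" "j \<noteq> i" "j \<noteq> i + 1"
  shows "th j (Top i (F \<tau>)) = scale (mu la \<tau> j) (Top i (F \<tau>))"
  using Tth[OF i j, of "F \<tau>"] by (simp add: eig[OF t j(1)] lin_facts(2)[OF T_lin[OF i]])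

lemma T_supp:
  assumes t: "\<tau> \<in> PSYT n la" and s: "\<sigma> \<in> PSYT n la" and i: "i \<in> {1..<n}"
    and r: "R (Top i (F \<tau>)) \<sigma> \<noteq> 0"
  shows "\<forall>x\<in>boxes la. snd (\<sigma> x) = snd (\<tau> x)"
proof (cases "\<sigma> = \<tau>")
  case True thus ?thesis by simp
next
  case False
  define w where "w = Top i (F \<tau>)"
  have rF: "R (F \<tau>) \<sigma> = 0" using R_F[OF t s] False by simp
  have i1: "i \<in> {1..n}" "i + 1 \<in> {1..n}" using i by auto
  have r': "R w \<sigma> \<noteq> 0" using r w_def by simp
  define j where "j = i + 1"
  have jd: "i + 1 = j" using j_def by simp
  have j1: "j \<in> {1..n}" using i1 jd by simp
  have e1: "mu la \<sigma> j * R w \<sigma> = mu la \<tau> i * R w \<sigma>"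
    using arg_cong[OF R1[OF t i, unfolded jd], of "\<lambda>v. R v \<sigma>"] unfolding w_def[symmetric]
    by (simp add: R_th[OF j1 s] R_add R_scale rF)
  have e2: "mu la \<sigma> i * R w \<sigma> = mu la \<tau> j * R w \<sigma>"
    using arg_cong[OF R2[OF t i, unfolded jd], of "\<lambda>v. R v \<sigma>"] unfolding w_def[symmetric]
    by (simp add: R_th[OF i1(1) s] R_add R_scale rF)
  have e3: "mu la \<sigma> j' * R w \<sigma> = mu la \<tau> j' * R w \<sigma>" if "j' \<in> {1..n}" "j' \<noteq> i" "j' \<noteq> i + 1" for j'
    using arg_cong[OF Rj[OF t i that], of "\<lambda>v. R v \<sigma>"] unfolding w_def[symmetric]
    by (simp add: R_th[OF that(1) s] R_scale)
  have m: "mu la \<sigma> k = mu la \<tau> (tr i k)" if k: "k \<in> {1..n}" for k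
  proof -
    consider "k = i" | "k = i + 1" | "k \<noteq> i" "k \<noteq> i + 1" by blast
    thus ?thesis
    proof cases
      case 1 thus ?thesis using e2 r' jd by (simp add: tr_def)
    next
      case 2 thus ?thesis using e1 r' jd by (simp add: tr_def)
    next
      case 3 thus ?thesis using e3[OF k 3] r' by (simp add: tr_def)
    qed
  qed
  have "\<forall>k\<in>{1..n}. ctau la \<sigma> k = ctau la \<tau> (tr i k) \<and> wtau la \<sigma> k = wtau la \<tau> (tr i k)"
    using m mu_inj by blast
  thus ?thesis using PSYT_perm_snd[OF part s t bij_tr] i by auto
qed

section \<open>Stability of U_T\<close>

definition U :: "(nat \<times> nat \<Rightarrow> nat) \<Rightarrow> 'v set" where
  "U T = vs.span (F ` PSYT_T n la T)"

lemma PSYT_T_sub: "PSYT_T n la T \<subseteq> PSYT n la" by (auto simp: PSYT_T_def)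

lemma U_iff: "v \<in> U T \<longleftrightarrow> supp v \<subseteq> PSYT_T n la T"
  unfolding U_def by (rule in_span_iff[OF PSYT_T_sub])

lemma F_in_U: "\<tau> \<in> PSYT_T n la T \<Longrightarrow> F \<tau> \<in> U T"
  unfolding U_def by (rule vs.span_base) auto

lemma U_sub: "vs.subspace (U T)" unfolding U_def by simp

lemma T_in_U:
  assumes t: "\<tau> \<in> PSYT_T n la T" and i: "i \<in> {1..<n}"
  shows "Top i (F \<tau>) \<in> U T"
  unfolding U_iff
proof
  fix \<sigma> assume "\<sigma> \<in> supp (Top i (F \<tau>))"
  hence s: "\<sigma> \<in> PSYT n la" "R (Top i (F \<tau>)) \<sigma> \<noteq> 0" unfolding supp_def by auto
  have t': "\<tau> \<in> PSYT n la" using t PSYT_T_sub by auto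
  have "\<forall>x\<in>boxes la. snd (\<sigma> x) = snd (\<tau> x)" by (rule T_supp[OF t' s(1) i s(2)])
  thus "\<sigma> \<in> PSYT_T n la T" using t s(1) by (auto simp: PSYT_T_def)
qed

lemma img_U:
  assumes l: "Vector_Spaces.linear scale scale f" and h: "\<And>\<tau>. \<tau> \<in> PSYT_T n la T \<Longrightarrow> f (F \<tau>) \<in> U T"
  shows "f ` U T \<subseteq> U T"
proof -
  have "f ` U T = vs.span (f ` F ` PSYT_T n la T)" unfolding U_def lin_facts(6)[OF l] ..
  also have "\<dots> \<subseteq> U T" by (rule vs.span_minimal) (use h U_sub in auto)
  finally show ?thesis .
qed

lemma U_stable: "An_stable n Top th (U T)"
  unfolding An_stable_def
proof (intro conjI ballI)
  fix i assume i: "i \<in> {1..<n}"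
  show T: "Top i ` U T \<subseteq> U T" by (rule img_U[OF T_lin[OF i] T_in_U[OF _ i]])
  show "Tinv Top i ` U T \<subseteq> U T"
  proof
    fix u assume "u \<in> Tinv Top i ` U T"
    then obtain v where v: "v \<in> U T" "u = Tinv Top i v" by auto
    have "Top i v \<in> U T" using T v by auto
    hence "scale (inverse tK) (Top i v + scale (tK - 1) v) \<in> U T"
      using v U_sub by (intro vs.subspace_scale vs.subspace_add) (auto intro: vs.subspace_scale)
    thus "u \<in> U T" using v Tinv_formula[OF i] by simp
  qed
next
  fix k assume k: "k \<in> {1..n}"
  show "th k ` U T \<subseteq> U T"
  proof (rule img_U[OF th_lin[OF k]])
    fix \<tau> assume t: "\<tau> \<in> PSYT_T n la T"
    have "th k (F \<tau>) = scale (mu la \<tau> k) (F \<tau>)" using eig[OF _ k] t PSYT_T_sub by auto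
    thus "th k (F \<tau>) \<in> U T" using vs.subspace_scale[OF U_sub F_in_U[OF t]] by simp
  qed
  show "inv (th k) ` U T \<subseteq> U T"
  proof
    fix u assume "u \<in> inv (th k) ` U T"
    then obtain v where v: "v \<in> U T" "u = inv (th k) v" by auto
    define u' where "u' = (\<Sum>\<sigma>\<in>supp v. scale (R v \<sigma> / mu la \<sigma> k) (F \<sigma>))"
    have sp: "supp v \<subseteq> PSYT_T n la T" using v U_iff by auto
    have "th k u' = (\<Sum>\<sigma>\<in>supp v. scale (R v \<sigma> / mu la \<sigma> k) (th k (F \<sigma>)))"
      unfolding u'_def by (simp add: lin_facts(5,2)[OF th_lin[OF k]])
    also have "\<dots> = (\<Sum>\<sigma>\<in>supp v. scale (R v \<sigma>) (F \<sigma>))"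
    proof (intro sum.cong refl)
      fix \<sigma> assume "\<sigma> \<in> supp v"
      hence "\<sigma> \<in> PSYT n la" using sp PSYT_T_sub by auto
      thus "scale (R v \<sigma> / mu la \<sigma> k) (th k (F \<sigma>)) = scale (R v \<sigma>) (F \<sigma>)"
        using mu_ne0[of la \<sigma> k] by (simp add: eig[OF _ k])
    qed
    also have "\<dots> = v" using expand[of v] by simp
    finally have "u = u'" using v th_bij[OF k] by (metis bij_is_inj inv_f_f)
    moreover have "u' \<in> U T" unfolding u'_def using sp F_in_U U_sub
      by (intro vs.subspace_sum vs.subspace_scale) auto
    ultimately show "u \<in> U T" by simp
  qed
qed

lemma U_submodule: "An_submodule scale n Top th (U T)"
  unfolding An_submodule_def using U_sub U_stable by simp

lemma F_ne0: "\<tau> \<in> PSYT n la \<Longrightarrow> F \<tau> \<noteq> 0"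
  using R_F[of \<tau> \<tau>] R_zero[of \<tau>] by auto

end

context VL begin

lemma supp_empty_zero: "supp v = {} \<Longrightarrow> v = 0"
  using expand[of v] by simp

lemma R_sum: "R (sum u J) \<sigma> = (\<Sum>j\<in>J. R (u j) \<sigma>)"
  by (induction J rule: infinite_finite_induct) (simp_all add: R_zero R_add)

lemma exists_F:
  assumes W: "vs.subspace W" and st: "An_stable n Top th W" and sub: "W \<subseteq> U T"
  shows "v \<in> W \<Longrightarrow> v \<noteq> 0 \<Longrightarrow> \<exists>\<sigma>\<in>PSYT_T n la T. F \<sigma> \<in> W"
proof (induction "card (supp v)" arbitrary: v rule: less_induct)
  case less
  have sp: "supp v \<subseteq> PSYT_T n la T" using less.prems sub U_iff by auto
  have ne: "supp v \<noteq> {}" using less.prems supp_empty_zero by auto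
  show ?case
  proof (cases "\<exists>\<sigma>\<in>supp v. \<exists>\<rho>\<in>supp v. \<sigma> \<noteq> \<rho>")
    case True
    then obtain \<sigma> \<rho> where sr: "\<sigma> \<in> supp v" "\<rho> \<in> supp v" "\<sigma> \<noteq> \<rho>" by blast
    have sP: "\<sigma> \<in> PSYT n la" "\<rho> \<in> PSYT n la" using sr unfolding supp_def by auto
    have "\<not> (\<forall>k\<in>{1..n}. ctau la \<sigma> k = ctau la \<rho> k \<and> wtau la \<sigma> k = wtau la \<rho> k)"
      using PSYT_weight_eq[OF part sP] sr(3) by blast
    then obtain k where k: "k \<in> {1..n}" and nk: "\<not> (ctau la \<sigma> k = ctau la \<rho> k \<and> wtau la \<sigma> k = wtau la \<rho> k)"
      by blast
    have mk: "mu la \<sigma> k \<noteq> mu la \<rho> k" using nk mu_inj by blast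
    define v' where "v' = th k v - scale (mu la \<rho> k) v"
    have thW: "th k v \<in> W" using st k less.prems(1) unfolding An_stable_def by blast
    have v'W: "v' \<in> W" unfolding v'_def using W thW less.prems(1)
      by (intro vs.subspace_diff vs.subspace_scale) auto
    have Rv': "R v' \<pi> = (mu la \<pi> k - mu la \<rho> k) * R v \<pi>" if "\<pi> \<in> PSYT n la" for \<pi>
      unfolding v'_def using that by (simp add: R_diff R_scale R_th[OF k] algebra_simps)
    have sub2: "supp v' \<subseteq> supp v - {\<rho>}"
      using Rv' unfolding supp_def by auto
    have sv': "\<sigma> \<in> supp v'" using Rv'[OF sP(1)] mk sr(1) sP(1) unfolding supp_def by auto
    have v'0: "v' \<noteq> 0"
    proof
      assume "v' = 0"
      hence "R v' \<sigma> = 0" by (simp add: R_zero)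
      thus False using sv' unfolding supp_def by auto
    qed
    have "card (supp v') \<le> card (supp v - {\<rho>})" using sub2 finite_supp by (intro card_mono) auto
    also have "\<dots> < card (supp v)" using sr(2) finite_supp by (intro card_Diff1_less) auto
    finally show ?thesis using less.hyps v'W v'0 by blast
  next
    case False
    obtain \<sigma> where s: "\<sigma> \<in> supp v" using ne by auto
    hence ss: "supp v = {\<sigma>}" using False by auto
    have v: "v = scale (R v \<sigma>) (F \<sigma>)" using expand[of v] unfolding ss by simp
    have r: "R v \<sigma> \<noteq> 0" using s unfolding supp_def by auto
    have "F \<sigma> = scale (inverse (R v \<sigma>)) v" using r by (subst v) simp
    hence "F \<sigma> \<in> W" using W less.prems(1) by (simp add: vs.subspace_scale)
    thus ?thesis using s sp by auto
  qed
qed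

lemma step_W:
  assumes W: "vs.subspace W" and st: "An_stable n Top th W"
    and t: "\<tau> \<in> PSYT_T n la T" and i: "1 \<le> i" "i < n" and t2: "s_tab i \<tau> \<in> PSYT_T n la T"
    and Fw: "F (s_tab i \<tau>) \<in> W"
  shows "F \<tau> \<in> W"
proof -
  have i': "i \<in> {1..<n}" using i by auto
  have tP: "\<tau> \<in> PSYT n la" and t2P: "s_tab i \<tau> \<in> PSYT n la" using t t2 PSYT_T_sub by auto
  have TW: "Top i v \<in> W" if "v \<in> W" for v using st i' that unfolding An_stable_def by blast
  have TiW: "Tinv Top i v \<in> W" if "v \<in> W" for v using st i' that unfolding An_stable_def by blast
  from s_up_either[OF part tP t2P i] show ?thesis
  proof
    assume su: "s_up la (s_tab i \<tau>) i"
    have "F (s_tab i (s_tab i \<tau>)) = scale tK (Tinv Top i (F (s_tab i \<tau>)))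
        + scale ((tK - 1) * mu la (s_tab i \<tau>) (i + 1) / (mu la (s_tab i \<tau>) i - mu la (s_tab i \<tau>) (i + 1))) (F (s_tab i \<tau>))"
      by (rule srec'[OF t2P i' _ su]) (simp add: s_tab_invol tP)
    hence e: "F \<tau> = scale tK (Tinv Top i (F (s_tab i \<tau>)))
        + scale ((tK - 1) * mu la (s_tab i \<tau>) (i + 1) / (mu la (s_tab i \<tau>) i - mu la (s_tab i \<tau>) (i + 1))) (F (s_tab i \<tau>))"
      by (simp add: s_tab_invol)
    show ?thesis unfolding e using W Fw TiW
      by (intro vs.subspace_add vs.subspace_scale) auto
  next
    assume su: "s_up la \<tau> i"
    define x where "x = mu la \<tau> i"
    define y where "y = mu la \<tau> (i + 1)"
    define c where "c = (tK - 1) * y / (x - y)"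
    define d where "d = tK - 1 + c"
    define \<beta> where "\<beta> = tK - c * d"
    define a where "a = F \<tau>"
    define b where "b = Top i a"
    define f' where "f' = F (s_tab i \<tau>)"
    have h: "f' = scale tK (Tinv Top i a) + scale c a"
      unfolding f'_def a_def c_def x_def y_def using srec'[OF tP i' t2P su] by simp
    have h2: "f' = b + scale d a"
      unfolding h tTinv[OF i'] d_def b_def by (simp add: algebra_simps)
    have h3: "Top i f' = scale tK a - scale (tK - 1) b + scale d b"
      unfolding h2 b_def by (simp add: lin_facts(1,2)[OF T_lin[OF i']] TT[OF i'])
    have key: "Top i f' - scale c f' = scale \<beta> a"
    proof (rule vec_eq)
      fix \<sigma> assume "\<sigma> \<in> PSYT n la"
      have r2: "R f' \<sigma> = R b \<sigma> + d * R a \<sigma>" using arg_cong[OF h2, of "\<lambda>v. R v \<sigma>"] by (simp add: R_add R_scale)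
      have r3: "R (Top i f') \<sigma> = tK * R a \<sigma> - (tK - 1) * R b \<sigma> + d * R b \<sigma>"
        using arg_cong[OF h3, of "\<lambda>v. R v \<sigma>"] by (simp add: R_add R_diff R_scale)
      show "R (Top i f' - scale c f') \<sigma> = R (scale \<beta> a) \<sigma>"
        by (simp add: R_diff R_scale r2 r3) (simp add: \<beta>_def d_def algebra_simps)
    qed
    have b0: "\<beta> \<noteq> 0"
      unfolding \<beta>_def d_def c_def using beta_ne0[OF s_up_mu[OF su] tK_ne0] x_def y_def by simp
    have "a = scale (inverse \<beta>) (Top i f' - scale c f')" using b0 unfolding key by simp
    moreover have "Top i f' - scale c f' \<in> W" using W Fw TW f'_def
      by (intro vs.subspace_diff vs.subspace_scale) auto
    ultimately show ?thesis using W a_def by (simp add: vs.subspace_scale)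
  qed
qed

lemma U_irreducible:
  assumes T: "T \<in> RYT la"
  shows "An_irreducible scale n Top th (U T)"
  unfolding An_irreducible_def
proof (intro conjI allI impI)
  show "An_submodule scale n Top th (U T)" by (rule U_submodule)
  obtain \<tau>0 where t0: "\<tau>0 \<in> PSYT_T n la T" using PSYT_T_nonempty[OF part T] by auto
  show "U T \<noteq> {0}"
  proof
    assume "U T = {0}"
    hence "F \<tau>0 = 0" using F_in_U[OF t0] by auto
    thus False using F_ne0 t0 PSYT_T_sub by auto
  qed
  fix W assume h: "An_submodule scale n Top th W \<and> W \<subseteq> U T"
  have W: "vs.subspace W" and st: "An_stable n Top th W" and sub: "W \<subseteq> U T"
    using h unfolding An_submodule_def by auto
  show "W = {0} \<or> W = U T"
  proof (cases "W = {0}")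
    case False
    have "0 \<in> W" using W by (rule vs.subspace_0)
    then obtain v where v: "v \<in> W" "v \<noteq> 0" using False by auto
    obtain \<sigma> where s: "\<sigma> \<in> PSYT_T n la T" "F \<sigma> \<in> W" using exists_F[OF W st sub v] by blast
    have all: "F \<tau> \<in> W" if "\<tau> \<in> PSYT_T n la T" for \<tau>
      using PSYT_T_connect[OF part s(1), of "\<lambda>\<tau>. F \<tau> \<in> W", OF s(2) _ that]
        step_W[OF W st] by blast
    have "U T \<subseteq> W" unfolding U_def by (rule vs.span_minimal) (use all W in auto)
    thus ?thesis using sub by auto
  qed simp
qed

lemma Tof_RYT:
  assumes t: "\<tau> \<in> PSYT n la"
  shows "(\<lambda>bx. snd (\<tau> bx)) \<in> RYT la"
  unfolding RYT_def
proof (intro CollectI conjI allI impI)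
  fix bx :: "nat \<times> nat" assume "bx \<notin> boxes la"
  thus "snd (\<tau> bx) = 0" using PSYT_D(1)[OF t] by simp
next
  fix a b assume ab: "(a, b) \<in> boxes la \<and> (a, b + 1) \<in> boxes la"
  thus "snd (\<tau> (a, b + 1)) \<le> snd (\<tau> (a, b))" using PSYT_D(3)[OF t, of a b] by (auto simp: lab_less_def)
next
  fix a b assume ab: "(a, b) \<in> boxes la \<and> (a + 1, b) \<in> boxes la"
  thus "snd (\<tau> (a + 1, b)) \<le> snd (\<tau> (a, b))" using PSYT_D(4)[OF t, of a b] by (auto simp: lab_less_def)
qed

lemma in_own: "\<tau> \<in> PSYT n la \<Longrightarrow> \<tau> \<in> PSYT_T n la (\<lambda>bx. snd (\<tau> bx))"
  by (simp add: PSYT_T_def)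

lemma PSYT_T_disj:
  assumes "T \<in> RYT la" "T' \<in> RYT la" "\<sigma> \<in> PSYT_T n la T" "\<sigma> \<in> PSYT_T n la T'"
  shows "T = T'"
proof
  fix bx
  have a: "\<forall>bx. bx \<notin> boxes la \<longrightarrow> T bx = 0" using assms(1) by (simp add: RYT_def)
  have b: "\<forall>bx. bx \<notin> boxes la \<longrightarrow> T' bx = 0" using assms(2) by (simp add: RYT_def)
  have c: "\<forall>bx\<in>boxes la. snd (\<sigma> bx) = T bx" using assms(3) by (simp add: PSYT_T_def)
  have d: "\<forall>bx\<in>boxes la. snd (\<sigma> bx) = T' bx" using assms(4) by (simp add: PSYT_T_def)
  show "T bx = T' bx"
  proof (cases "bx \<in> boxes la")
    case True thus ?thesis using c d by metis
  next
    case False thus ?thesis using a b by metis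
  qed
qed

lemma dsum: "internal_direct_sum scale (RYT la) U UNIV"
  unfolding internal_direct_sum_def
proof (intro conjI allI impI)
  have "F ` PSYT n la \<subseteq> (\<Union>T\<in>RYT la. U T)"
    using Tof_RYT in_own F_in_U by blast
  hence "vs.span (F ` PSYT n la) \<subseteq> vs.span (\<Union>T\<in>RYT la. U T)" by (rule vs.span_mono)
  thus "vs.span (\<Union>T\<in>RYT la. U T) = UNIV" using spanU by auto
next
  fix J u assume h: "finite J \<and> J \<subseteq> RYT la \<and> (\<forall>j\<in>J. u j \<in> U j) \<and> sum u J = 0"
  show "\<forall>j\<in>J. u j = 0"
  proof
    fix j0 assume j0: "j0 \<in> J"
    show "u j0 = 0"
    proof (rule vec_eq)
      fix \<sigma> assume s: "\<sigma> \<in> PSYT n la"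
      show "R (u j0) \<sigma> = R 0 \<sigma>"
      proof (rule ccontr)
        assume ne: "R (u j0) \<sigma> \<noteq> R 0 \<sigma>"
        hence "\<sigma> \<in> supp (u j0)" using s by (simp add: supp_def R_zero)
        hence s0: "\<sigma> \<in> PSYT_T n la j0" using h j0 U_iff by blast
        have z: "R (u j) \<sigma> = 0" if "j \<in> J - {j0}" for j
        proof (rule ccontr)
          assume "R (u j) \<sigma> \<noteq> 0"
          hence "\<sigma> \<in> supp (u j)" using s by (simp add: supp_def)
          hence "\<sigma> \<in> PSYT_T n la j" using h that U_iff by blast
          moreover have "j \<in> RYT la" "j0 \<in> RYT la" using h that j0 by auto
          ultimately have "j = j0" using PSYT_T_disj[of j j0 \<sigma>] s0 by blast
          thus False using that by simp
        qed
        have "R (sum u J) \<sigma> = R (u j0) \<sigma> + (\<Sum>j\<in>J - {j0}. R (u j) \<sigma>)"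
          unfolding R_sum using h j0 by (simp add: sum.remove)
        also have "\<dots> = R (u j0) \<sigma>" using z by simp
        finally show False using h ne by (simp add: R_zero)
      qed
    qed
  qed
qed

end

theorem mainTheorem9:
  fixes scale :: "K \<Rightarrow> 'v::ab_group_add \<Rightarrow> 'v"
    and n :: nat and la :: "nat list"
    and Top th X :: "nat \<Rightarrow> 'v \<Rightarrow> 'v"
    and F :: "(nat \<times> nat \<Rightarrow> nat \<times> nat) \<Rightarrow> 'v"
  assumes "1 \<le> n"
    and "is_partition la n"
    and "V_lambda_data scale n la Top th X F"
  shows "internal_direct_sum scale (RYT la) (U_T scale n la F) UNIV
     \<and> (\<forall>T\<in>RYT la. An_irreducible scale n Top th (U_T scale n la F T))"
proof -
  interpret VL scale n la Top th X F using assms by unfold_locales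
  have UU: "U_T scale n la F = U" by (rule ext) (simp add: U_T_def U_def)
  show ?thesis unfolding UU using dsum U_irreducible by blast
qed

end
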